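(* Let $G$ be a finite group and consider a stem extension $\{e\}\to M(G)\xrightarrow{\iota}\tilde{G}\xrightarrow{\pi}G\to\{e\}$ with $\tilde G$ a Schur cover of $G$. Let $H$ be a proper subgroup of $G$ such that $M(H)\cong M(G)$ and $\iota(M(G))\subseteq[\pi^{-1}(H),\pi^{-1}(H)]$. Then the subgraph of $\Delta_D(G)$ induced by $H$ equals $\Delta_D(H)$.
   Context: $M(G)$ denotes the Schur multiplier of $G$. A stem extension of $G$ is a central extension $\{e\}\to N\xrightarrow{\iota}\hat{G}\xrightarrow{\pi}G\to\{e\}$ with $\iota(N)\subseteq Z(\hat{G})\cap[\hat{G},\hat{G}]$; a Schur cover is a stem extension of maximal order (its kernel is $M(G)$). The deep commuting graph $\Delta_D(G)$ is the simple graph with vertex set $G$ in which two distinct vertices are adjacent if and only if their preimages under the projection from a Schur cover commute in that Schur cover (independent of the choice of Schur cover and preimages). *)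

theory Defs
  imports "HOL-Algebra.Algebra"
begin

definition group_center :: "('a, 'm) monoid_scheme \<Rightarrow> 'a set" where
  "group_center G = {z \<in> carrier G. \<forall>g \<in> carrier G. z \<otimes>\<^bsub>G\<^esub> g = g \<otimes>\<^bsub>G\<^esub> z}"

text \<open>A central extension of G, given by a surjective homomorphism proj from Gh onto G
  whose kernel (the image of iota, iota being the inclusion) is central.\<close>
definition central_extension ::
  "('b, 'n) monoid_scheme \<Rightarrow> ('a, 'm) monoid_scheme \<Rightarrow> ('b \<Rightarrow> 'a) \<Rightarrow> bool" where
  "central_extension Gh G proj \<longleftrightarrow>
     group Gh \<and> group G \<and> proj \<in> hom Gh G \<and> proj ` carrier Gh = carrier G \<and>
     kernel Gh G proj \<subseteq> group_center Gh"

definition stem_extension ::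
  "('b, 'n) monoid_scheme \<Rightarrow> ('a, 'm) monoid_scheme \<Rightarrow> ('b \<Rightarrow> 'a) \<Rightarrow> bool" where
  "stem_extension Gh G proj \<longleftrightarrow>
     central_extension Gh G proj \<and>
     kernel Gh G proj \<subseteq> group_center Gh \<inter> derived Gh (carrier Gh)"

text \<open>Competing stem extensions
  are taken on the carrier type nat; every finite group is isomorphic to one on nat,
  so this is no loss of generality for finite G.\<close>
definition schur_cover ::
  "('b, 'n) monoid_scheme \<Rightarrow> ('a, 'm) monoid_scheme \<Rightarrow> ('b \<Rightarrow> 'a) \<Rightarrow> bool" where
  "schur_cover Gh G proj \<longleftrightarrow>
     stem_extension Gh G proj \<and> finite (carrier Gh) \<and>
     (\<forall>(K :: nat monoid) (rho :: nat \<Rightarrow> 'a). stem_extension K G rho \<longrightarrow> order K \<le> order Gh)"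

text \<open>Deep commuting graph of G computed from the Schur cover (Gh, proj):
  vertex set carrier G, edge set a set of ordered pairs (symmetric).\<close>
definition deep_commuting_graph ::
  "('b, 'n) monoid_scheme \<Rightarrow> ('b \<Rightarrow> 'a) \<Rightarrow> ('a, 'm) monoid_scheme \<Rightarrow> 'a set \<times> ('a \<times> 'a) set" where
  "deep_commuting_graph Gh proj G =
     (carrier G,
      {(x, y). x \<in> carrier G \<and> y \<in> carrier G \<and> x \<noteq> y \<and>
         (\<forall>a \<in> carrier Gh. \<forall>b \<in> carrier Gh. proj a = x \<longrightarrow> proj b = y \<longrightarrow>
              a \<otimes>\<^bsub>Gh\<^esub> b = b \<otimes>\<^bsub>Gh\<^esub> a)})"

definition induced_subgraph :: "'a set \<times> ('a \<times> 'a) set \<Rightarrow> 'a set \<Rightarrow> 'a set \<times> ('a \<times> 'a) set" where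
  "induced_subgraph Gr S = (fst Gr \<inter> S, snd Gr \<inter> (S \<times> S))"

end

theory Submission
  imports Defs Complex_Main
begin

definition circ :: "('i \<Rightarrow> real) monoid" where
  "circ = \<lparr>carrier = {g. \<forall>i. 0 \<le> g i \<and> g i < 1},
           monoid.mult = (\<lambda>a b. (\<lambda>i. frac (a i + b i))), one = (\<lambda>i. 0)\<rparr>"

lemma circ_carrier: "carrier circ = {g. \<forall>i. 0 \<le> g i \<and> g i < 1}"
  by (simp add: circ_def)
lemma circ_mult: "a \<otimes>\<^bsub>circ\<^esub> b = (\<lambda>i. frac (a i + b i))"
  by (simp add: circ_def)
lemma circ_one: "\<one>\<^bsub>circ\<^esub> = (\<lambda>i. 0)"
  by (simp add: circ_def)

lemma frac_id_circ: "g \<in> carrier circ \<Longrightarrow> frac (g i) = g i"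
  by (simp add: circ_carrier frac_eq)

lemma circ_comm_group: "comm_group (circ :: ('i \<Rightarrow> real) monoid)"
proof (rule group.group_comm_groupI)
  show "group (circ :: ('i \<Rightarrow> real) monoid)"
  proof (rule groupI)
    fix x y :: "'i \<Rightarrow> real"
    show "x \<otimes>\<^bsub>circ\<^esub> y \<in> carrier circ"
      by (simp add: circ_mult circ_carrier frac_lt_1)
  next
    show "\<one>\<^bsub>circ\<^esub> \<in> carrier (circ :: ('i \<Rightarrow> real) monoid)"
      by (simp add: circ_one circ_carrier)
  next
    fix x y z :: "'i \<Rightarrow> real"
    show "x \<otimes>\<^bsub>circ\<^esub> y \<otimes>\<^bsub>circ\<^esub> z = x \<otimes>\<^bsub>circ\<^esub> (y \<otimes>\<^bsub>circ\<^esub> z)"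
      by (simp add: circ_mult add.assoc)
  next
    fix x :: "'i \<Rightarrow> real"
    assume "x \<in> carrier circ"
    then show "\<one>\<^bsub>circ\<^esub> \<otimes>\<^bsub>circ\<^esub> x = x"
      by (simp add: circ_mult circ_one frac_id_circ)
  next
    fix x :: "'i \<Rightarrow> real"
    assume x: "x \<in> carrier circ"
    show "\<exists>y\<in>carrier circ. y \<otimes>\<^bsub>circ\<^esub> x = \<one>\<^bsub>circ\<^esub>"
    proof (intro bexI)
      show "(\<lambda>i. frac (- x i)) \<otimes>\<^bsub>circ\<^esub> x = \<one>\<^bsub>circ\<^esub>"
        by (simp add: circ_mult circ_one)
      show "(\<lambda>i. frac (- x i)) \<in> carrier circ"
        by (simp add: circ_carrier frac_lt_1)
    qed
  qed
next
  fix x y :: "'i \<Rightarrow> real"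
  show "x \<otimes>\<^bsub>circ\<^esub> y = y \<otimes>\<^bsub>circ\<^esub> x"
    by (simp add: circ_mult add.commute)
qed

lemma circ_group: "group (circ :: ('i \<Rightarrow> real) monoid)"
  using circ_comm_group comm_group.axioms(2) by blast

lemma circ_nat_pow:
  assumes "g \<in> carrier circ"
  shows "g [^]\<^bsub>circ\<^esub> (n::nat) = (\<lambda>i. frac (real n * g i))"
proof (induction n)
  case 0
  then show ?case by (simp add: circ_one)
next
  case (Suc n)
  then show ?case
    by (simp add: circ_mult algebra_simps)
qed

lemma circ_int_pow:
  assumes "g \<in> carrier circ"
  shows "g [^]\<^bsub>circ\<^esub> (k::int) = (\<lambda>i. frac (of_int k * g i))"
proof (cases "k \<ge> 0")
  case True
  define n where "n = nat k"
  have "k = int n" using True by (simp add: n_def)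
  then show ?thesis using circ_nat_pow[OF assms, of n]
    by (simp add: int_pow_int)
next
  case False
  define n where "n = nat (- k)"
  have n: "k = - int n" using False by (simp add: n_def)
  have "g [^]\<^bsub>circ\<^esub> k = inv\<^bsub>circ\<^esub> (g [^]\<^bsub>circ\<^esub> n)"
    using n by (simp add: group.int_pow_neg_int[OF circ_group] assms)
  also have "\<dots> = (\<lambda>i. frac (- (real n * g i)))"
  proof (rule group.inv_equality[OF circ_group])
    show "(\<lambda>i. frac (- (real n * g i))) \<otimes>\<^bsub>circ\<^esub> g [^]\<^bsub>circ\<^esub> n = \<one>\<^bsub>circ\<^esub>"
      by (simp add: circ_nat_pow[OF assms] circ_mult circ_one)
    show "(\<lambda>i. frac (- (real n * g i))) \<in> carrier circ"
      by (simp add: circ_carrier frac_lt_1)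
    show "g [^]\<^bsub>circ\<^esub> n \<in> carrier circ"
      by (simp add: circ_nat_pow[OF assms] circ_carrier frac_lt_1)
  qed
  finally show ?thesis using n by simp
qed

definition divisible :: "('a, 'm) monoid_scheme \<Rightarrow> bool" where
  "divisible Q \<longleftrightarrow> (\<forall>q \<in> carrier Q. \<forall>n::nat. n > 0 \<longrightarrow> (\<exists>r \<in> carrier Q. r [^]\<^bsub>Q\<^esub> n = q))"

lemma circ_divisible: "divisible (circ :: ('i \<Rightarrow> real) monoid)"
  unfolding divisible_def
proof (intro ballI allI impI)
  fix q :: "'i \<Rightarrow> real" and n :: nat
  assume q: "q \<in> carrier circ" and n: "n > 0"
  let ?r = "(\<lambda>i. q i / real n)"
  have r: "?r \<in> carrier circ"
  proof -
    have "1 \<le> real n" using n by simp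
    show ?thesis unfolding circ_carrier
    proof (intro CollectI allI conjI)
      fix i
      have "0 \<le> q i" "q i < 1" using q by (auto simp: circ_carrier)
      then show "0 \<le> q i / real n" by simp
      have "q i < real n" using \<open>q i < 1\<close> \<open>1 \<le> real n\<close> by linarith
      then show "q i / real n < 1" using n by (simp add: divide_less_eq)
    qed
  qed
  moreover have "?r [^]\<^bsub>circ\<^esub> n = q"
    using n by (simp add: circ_nat_pow[OF r] frac_id_circ[OF q])
  ultimately show "\<exists>r\<in>carrier circ. r [^]\<^bsub>circ\<^esub> n = q" by blast
qed

definition adj :: "('a, 'm) monoid_scheme \<Rightarrow> 'a set \<Rightarrow> 'a \<Rightarrow> 'a set" where
  "adj G B x = {b \<otimes>\<^bsub>G\<^esub> x [^]\<^bsub>G\<^esub> (k::int) | b k. b \<in> B}"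

context group
begin

lemma inv_cancel_left1 [simp]: "a \<in> carrier G \<Longrightarrow> c \<in> carrier G \<Longrightarrow> inv a \<otimes> (a \<otimes> c) = c"
  by (simp add: m_assoc[symmetric])
lemma inv_cancel_left2 [simp]: "a \<in> carrier G \<Longrightarrow> c \<in> carrier G \<Longrightarrow> a \<otimes> (inv a \<otimes> c) = c"
  by (simp add: m_assoc[symmetric])

lemma comm_in_derived:
  assumes "a \<in> carrier G" "y \<in> carrier G"
  shows "a \<otimes> y \<otimes> inv a \<otimes> inv y \<in> derived G (carrier G)"
  unfolding derived_def using assms by (intro generate.incl) blast

lemma conj_eq_comm:
  assumes "b \<in> carrier G" "y \<in> carrier G"
  shows "y \<otimes> b \<otimes> inv y = b \<otimes> (inv b \<otimes> y \<otimes> inv (inv b) \<otimes> inv y)"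
  using assms by (simp add: m_assoc[symmetric])

lemma conj_in_B:
  assumes B: "subgroup B G" and D: "derived G (carrier G) \<subseteq> B" and b: "b \<in> B" and y: "y \<in> carrier G"
  shows "y \<otimes> b \<otimes> inv y \<in> B"
proof -
  have bc: "b \<in> carrier G" using B b subgroup.subset by blast
  have "inv b \<otimes> y \<otimes> inv (inv b) \<otimes> inv y \<in> B"
    using D comm_in_derived[of "inv b" y] bc y by blast
  then show ?thesis using conj_eq_comm[OF bc y] b B subgroup.m_closed by metis
qed

lemma conj_phi:
  fixes Q :: "('q, 'r) monoid_scheme"
  assumes Q: "group Q"
  and B: "subgroup B G" and D: "derived G (carrier G) \<subseteq> B"
  and phi: "\<phi> \<in> hom (G\<lparr>carrier := B\<rparr>) Q" and kill: "\<forall>d \<in> derived G (carrier G). \<phi> d = \<one>\<^bsub>Q\<^esub>"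
  and b: "b \<in> B" and y: "y \<in> carrier G"
  shows "\<phi> (y \<otimes> b \<otimes> inv y) = \<phi> b"
proof -
  have bc: "b \<in> carrier G" using B b subgroup.subset by blast
  let ?c = "inv b \<otimes> y \<otimes> inv (inv b) \<otimes> inv y"
  have cd: "?c \<in> derived G (carrier G)" using comm_in_derived[of "inv b" y] bc y by blast
  have cB: "?c \<in> B" using cd D by blast
  have "\<phi> (y \<otimes> b \<otimes> inv y) = \<phi> (b \<otimes> ?c)" using conj_eq_comm[OF bc y] by simp
  also have "\<dots> = \<phi> b \<otimes>\<^bsub>Q\<^esub> \<phi> ?c" using phi b cB by (simp add: hom_def)
  also have "\<dots> = \<phi> b" using kill cd phi b Q by (simp add: hom_def Pi_def group.is_monoid monoid.r_one)
  finally show ?thesis .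
qed

lemma adj_subgroup:
  assumes B: "subgroup B G" and D: "derived G (carrier G) \<subseteq> B" and x: "x \<in> carrier G"
  shows "subgroup (adj G B x) G" "B \<subseteq> adj G B x" "x \<in> adj G B x"
proof -
  have sub: "B \<subseteq> carrier G" using B subgroup.subset by blast
  show "subgroup (adj G B x) G"
  proof (rule subgroupI)
    show "adj G B x \<subseteq> carrier G" using sub x by (auto simp: adj_def)
    show "adj G B x \<noteq> {}" unfolding adj_def using subgroup.one_closed[OF B] by blast
  next
    fix z assume "z \<in> adj G B x"
    then obtain b k where bk: "b \<in> B" "z = b \<otimes> x [^] (k::int)" by (auto simp: adj_def)
    have bc: "b \<in> carrier G" using bk sub by blast
    have "inv z = x [^] (-k) \<otimes> inv b" using bk bc x by (simp add: inv_mult_group int_pow_neg)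
    also have "\<dots> = (x [^] (-k) \<otimes> inv b \<otimes> inv (x [^] (-k))) \<otimes> x [^] (-k)"
      using bc x by (simp add: m_assoc)
    finally have "inv z = (x [^] (-k) \<otimes> inv b \<otimes> inv (x [^] (-k))) \<otimes> x [^] (-k)" .
    moreover have "x [^] (-k) \<otimes> inv b \<otimes> inv (x [^] (-k)) \<in> B"
      by (rule conj_in_B[OF B D subgroup.m_inv_closed[OF B bk(1)]]) (simp add: x)
    ultimately show "inv z \<in> adj G B x" unfolding adj_def by blast
  next
    fix z w assume "z \<in> adj G B x" "w \<in> adj G B x"
    then obtain b k b' k' where bk: "b \<in> B" "z = b \<otimes> x [^] (k::int)" "b' \<in> B" "w = b' \<otimes> x [^] (k'::int)"
      by (auto simp: adj_def)
    have bc: "b \<in> carrier G" "b' \<in> carrier G" using bk sub by blast+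
    have "z \<otimes> w = (b \<otimes> (x [^] k \<otimes> b' \<otimes> inv (x [^] k))) \<otimes> x [^] (k + k')"
      using bk bc x by (simp add: int_pow_mult m_assoc)
    moreover have "b \<otimes> (x [^] k \<otimes> b' \<otimes> inv (x [^] k)) \<in> B"
      by (rule subgroup.m_closed[OF B bk(1) conj_in_B[OF B D bk(3)]]) (simp add: x)
    ultimately show "z \<otimes> w \<in> adj G B x" unfolding adj_def by blast
  qed
  show "B \<subseteq> adj G B x"
  proof
    fix b assume "b \<in> B"
    then have "b = b \<otimes> x [^] (0::int)" using sub by auto
    then show "b \<in> adj G B x" using \<open>b \<in> B\<close> unfolding adj_def by blast
  qed
  have "x = \<one> \<otimes> x [^] (1::int)" using x by simp
  then show "x \<in> adj G B x" unfolding adj_def using subgroup.one_closed[OF B] by blast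
qed

end

lemma (in comm_group) cg_swap:
  assumes "a \<in> carrier G" "b \<in> carrier G" "c \<in> carrier G" "d \<in> carrier G"
    and "inv a \<otimes> b = c \<otimes> inv d"
  shows "b \<otimes> d = a \<otimes> c"
proof -
  have "b = a \<otimes> (inv a \<otimes> b)" using assms(1,2) by simp
  also have "\<dots> = a \<otimes> (c \<otimes> inv d)" using assms by simp
  finally have "b \<otimes> d = a \<otimes> (c \<otimes> inv d) \<otimes> d" by simp
  also have "\<dots> = a \<otimes> c" using assms by (simp add: m_assoc)
  finally show ?thesis .
qed

lemma (in comm_group) cg_4:
  assumes "a \<in> carrier G" "b \<in> carrier G" "c \<in> carrier G" "d \<in> carrier G"
  shows "a \<otimes> c \<otimes> (b \<otimes> d) = a \<otimes> b \<otimes> (c \<otimes> d)"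
  using assms by (simp add: m_assoc m_lcomm)

context group
begin

lemma ext_step:
  fixes Q :: "('q, 'r) monoid_scheme"
  assumes Q: "comm_group Q" and B: "subgroup B G" and D: "derived G (carrier G) \<subseteq> B"
  and phi: "\<phi> \<in> hom (G\<lparr>carrier := B\<rparr>) Q" and kill: "\<forall>d\<in>derived G (carrier G). \<phi> d = \<one>\<^bsub>Q\<^esub>"
  and x: "x \<in> carrier G" and q: "q \<in> carrier Q"
  and cond: "\<And>k::int. x [^] k \<in> B \<Longrightarrow> \<phi> (x [^] k) = q [^]\<^bsub>Q\<^esub> k"
  shows "\<exists>\<Phi>. \<Phi> \<in> hom (G\<lparr>carrier := adj G B x\<rparr>) Q \<and> (\<forall>b\<in>B. \<Phi> b = \<phi> b) \<and> \<Phi> x = q"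
proof -
  interpret Q: comm_group Q by fact
  have sub: "B \<subseteq> carrier G" using B subgroup.subset by blast
  have grpB: "group (G\<lparr>carrier := B\<rparr>)" using subgroup_imp_group[OF B] .
  interpret h: group_hom "G\<lparr>carrier := B\<rparr>" Q \<phi>
    using grpB phi Q.group_axioms by (simp add: group_hom_def group_hom_axioms_def)
  have phiC: "\<And>b. b \<in> B \<Longrightarrow> \<phi> b \<in> carrier Q" using phi by (auto simp: hom_def)
  have phiM: "\<And>a b. a \<in> B \<Longrightarrow> b \<in> B \<Longrightarrow> \<phi> (a \<otimes> b) = \<phi> a \<otimes>\<^bsub>Q\<^esub> \<phi> b"
    using phi by (auto simp: hom_def)
  have phiI: "\<And>b. b \<in> B \<Longrightarrow> \<phi> (inv b) = inv\<^bsub>Q\<^esub> (\<phi> b)"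
  proof -
    fix b assume b: "b \<in> B"
    have "\<phi> (inv\<^bsub>G\<lparr>carrier := B\<rparr>\<^esub> b) = inv\<^bsub>Q\<^esub> (\<phi> b)" using b by (intro h.hom_inv) simp
    then show "\<phi> (inv b) = inv\<^bsub>Q\<^esub> (\<phi> b)" using m_inv_consistent[OF B b] by simp
  qed
  have wd: "\<phi> b \<otimes>\<^bsub>Q\<^esub> q [^]\<^bsub>Q\<^esub> k = \<phi> b' \<otimes>\<^bsub>Q\<^esub> q [^]\<^bsub>Q\<^esub> k'"
    if b: "b \<in> B" and b': "b' \<in> B" and eq: "b \<otimes> x [^] (k::int) = b' \<otimes> x [^] (k'::int)" for b b' k k'
  proof -
    have bc: "b \<in> carrier G" "b' \<in> carrier G" using b b' sub by blast+
    have "inv b' \<otimes> b = inv b' \<otimes> (b \<otimes> x [^] k) \<otimes> inv (x [^] k)"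
      using bc x by (simp add: m_assoc)
    also have "\<dots> = inv b' \<otimes> (b' \<otimes> x [^] k') \<otimes> inv (x [^] k)" using eq by simp
    also have "\<dots> = x [^] k' \<otimes> inv (x [^] k)" using bc x by (simp add: m_assoc[symmetric])
    also have "\<dots> = x [^] (k' - k)" using x by (simp add: int_pow_diff)
    finally have e1: "inv b' \<otimes> b = x [^] (k' - k)" .
    have inB: "x [^] (k' - k) \<in> B"
      using e1 subgroup.m_closed[OF B subgroup.m_inv_closed[OF B b'] b] by simp
    have "inv\<^bsub>Q\<^esub> (\<phi> b') \<otimes>\<^bsub>Q\<^esub> \<phi> b = \<phi> (inv b' \<otimes> b)"
      using phiM[OF subgroup.m_inv_closed[OF B b'] b] phiI[OF b'] by simp
    also have "\<dots> = q [^]\<^bsub>Q\<^esub> (k' - k)" using e1 cond[OF inB] by simp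
    also have "\<dots> = q [^]\<^bsub>Q\<^esub> k' \<otimes>\<^bsub>Q\<^esub> inv\<^bsub>Q\<^esub> (q [^]\<^bsub>Q\<^esub> k)" using q by (simp add: Q.int_pow_diff)
    finally have "inv\<^bsub>Q\<^esub> (\<phi> b') \<otimes>\<^bsub>Q\<^esub> \<phi> b = q [^]\<^bsub>Q\<^esub> k' \<otimes>\<^bsub>Q\<^esub> inv\<^bsub>Q\<^esub> (q [^]\<^bsub>Q\<^esub> k)" .
    then show ?thesis
      using Q.cg_swap[of "\<phi> b'" "\<phi> b" "q [^]\<^bsub>Q\<^esub> k'" "q [^]\<^bsub>Q\<^esub> k"] phiC b b' q by simp
  qed
  define \<Phi> where "\<Phi> z = (let p = (SOME p. fst p \<in> B \<and> z = fst p \<otimes> x [^] (snd p::int))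
                             in \<phi> (fst p) \<otimes>\<^bsub>Q\<^esub> q [^]\<^bsub>Q\<^esub> snd p)" for z
  have Phi_eq: "\<Phi> (b \<otimes> x [^] k) = \<phi> b \<otimes>\<^bsub>Q\<^esub> q [^]\<^bsub>Q\<^esub> k" if b: "b \<in> B" for b and k :: int
  proof -
    let ?P = "\<lambda>p. fst p \<in> B \<and> b \<otimes> x [^] k = fst p \<otimes> x [^] (snd p::int)"
    have ex: "\<exists>p. ?P p" using b by (intro exI[of _ "(b, k)"]) simp
    define p where "p = (SOME p. ?P p)"
    have Pp: "?P p" unfolding p_def using someI_ex[OF ex] .
    have "\<Phi> (b \<otimes> x [^] k) = \<phi> (fst p) \<otimes>\<^bsub>Q\<^esub> q [^]\<^bsub>Q\<^esub> snd p"
      unfolding \<Phi>_def p_def by (simp add: Let_def)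
    also have "\<dots> = \<phi> b \<otimes>\<^bsub>Q\<^esub> q [^]\<^bsub>Q\<^esub> k"
      using wd[of "fst p" b "snd p" k] Pp b by simp
    finally show ?thesis .
  qed
  have "\<Phi> \<in> hom (G\<lparr>carrier := adj G B x\<rparr>) Q"
  proof (rule homI)
    fix z assume "z \<in> carrier (G\<lparr>carrier := adj G B x\<rparr>)"
    then obtain b k where bk: "b \<in> B" "z = b \<otimes> x [^] (k::int)" by (auto simp: adj_def)
    show "\<Phi> z \<in> carrier Q" using bk Phi_eq phiC q by simp
  next
    fix z w assume "z \<in> carrier (G\<lparr>carrier := adj G B x\<rparr>)" "w \<in> carrier (G\<lparr>carrier := adj G B x\<rparr>)"
    then obtain b k b' k' where bk: "b \<in> B" "z = b \<otimes> x [^] (k::int)" "b' \<in> B" "w = b' \<otimes> x [^] (k'::int)"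
      by (auto simp: adj_def)
    have bc: "b \<in> carrier G" "b' \<in> carrier G" using bk sub by blast+
    let ?c = "x [^] k \<otimes> b' \<otimes> inv (x [^] k)"
    have cB: "?c \<in> B" by (rule conj_in_B[OF B D bk(3)]) (simp add: x)
    have cphi: "\<phi> ?c = \<phi> b'" by (rule conj_phi[OF Q.group_axioms B D phi kill bk(3)]) (simp add: x)
    have "z \<otimes> w = (b \<otimes> ?c) \<otimes> x [^] (k + k')"
      using bk bc x by (simp add: int_pow_mult m_assoc)
    then have "\<Phi> (z \<otimes> w) = \<phi> (b \<otimes> ?c) \<otimes>\<^bsub>Q\<^esub> q [^]\<^bsub>Q\<^esub> (k + k')"
      using Phi_eq subgroup.m_closed[OF B bk(1) cB] by simp
    also have "\<dots> = \<phi> b \<otimes>\<^bsub>Q\<^esub> \<phi> b' \<otimes>\<^bsub>Q\<^esub> (q [^]\<^bsub>Q\<^esub> k \<otimes>\<^bsub>Q\<^esub> q [^]\<^bsub>Q\<^esub> k')"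
      using phiM[OF bk(1) cB] cphi q by (simp add: Q.int_pow_mult)
    also have "\<dots> = (\<phi> b \<otimes>\<^bsub>Q\<^esub> q [^]\<^bsub>Q\<^esub> k) \<otimes>\<^bsub>Q\<^esub> (\<phi> b' \<otimes>\<^bsub>Q\<^esub> q [^]\<^bsub>Q\<^esub> k')"
      using Q.cg_4 phiC bk q by simp
    also have "\<dots> = \<Phi> z \<otimes>\<^bsub>Q\<^esub> \<Phi> w" using bk Phi_eq by simp
    finally show "\<Phi> (z \<otimes>\<^bsub>G\<lparr>carrier := adj G B x\<rparr>\<^esub> w) = \<Phi> z \<otimes>\<^bsub>Q\<^esub> \<Phi> w" by simp
  qed
  moreover have "\<forall>b\<in>B. \<Phi> b = \<phi> b"
  proof
    fix b assume b: "b \<in> B"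
    have "\<Phi> b = \<Phi> (b \<otimes> x [^] (0::int))" using b sub by auto
    also have "\<dots> = \<phi> b" using Phi_eq[OF b, of 0] phiC[OF b] by simp
    finally show "\<Phi> b = \<phi> b" .
  qed
  moreover have "\<Phi> x = q"
  proof -
    have one: "\<one> \<in> B" using subgroup.one_closed[OF B] .
    have "\<Phi> x = \<Phi> (\<one> \<otimes> x [^] (1::int))" using x by simp
    also have "\<dots> = \<phi> \<one> \<otimes>\<^bsub>Q\<^esub> q [^]\<^bsub>Q\<^esub> (1::int)" using Phi_eq[OF one] by blast
    also have "\<phi> \<one> = \<one>\<^bsub>Q\<^esub>" using h.hom_one by simp
    finally show ?thesis using q by simp
  qed
  ultimately show ?thesis by blast
qed


lemma ext_all:
  fixes Q :: "('q, 'r) monoid_scheme"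
  assumes fin: "finite (carrier G)" and Q: "comm_group Q" and dv: "divisible Q"
  shows "subgroup B G \<Longrightarrow> derived G (carrier G) \<subseteq> B \<Longrightarrow> \<phi> \<in> hom (G\<lparr>carrier := B\<rparr>) Q
    \<Longrightarrow> \<forall>d\<in>derived G (carrier G). \<phi> d = \<one>\<^bsub>Q\<^esub> \<Longrightarrow> \<exists>\<Phi>. \<Phi> \<in> hom G Q \<and> (\<forall>b\<in>B. \<Phi> b = \<phi> b)"
proof (induction "card (carrier G - B)" arbitrary: B \<phi> rule: less_induct)
  case less
  interpret Q: comm_group Q by fact
  have sub: "B \<subseteq> carrier G" using less.prems(1) subgroup.subset by blast
  show ?case
  proof (cases "B = carrier G")
    case True
    have "\<phi> \<in> hom G Q" using less.prems(3) True unfolding hom_def by simp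
    then show ?thesis by blast
  next
    case False
    then obtain x where x: "x \<in> carrier G" "x \<notin> B" using sub by blast
    have o1: "ord x \<ge> 1" using ord_ge_1[OF fin x(1)] .
    have ob: "x [^] ord x \<in> B" using x(1) subgroup.one_closed[OF less.prems(1)] by simp
    define k0 where "k0 = (LEAST k::nat. 0 < k \<and> x [^] k \<in> B)"
    have k0: "0 < k0 \<and> x [^] k0 \<in> B"
      unfolding k0_def by (rule LeastI[of _ "ord x"]) (use o1 ob in auto)
    have kmin: "x [^] k \<notin> B" if "0 < k" "k < k0" for k :: nat
      using not_less_Least[of k "\<lambda>k. 0 < k \<and> x [^] k \<in> B"] that unfolding k0_def by blast
    let ?y = "x [^] k0"
    have yB: "?y \<in> B" using k0 by blast
    have phyC: "\<phi> ?y \<in> carrier Q" using less.prems(3) yB by (auto simp: hom_def)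
    obtain r where r: "r \<in> carrier Q" "r [^]\<^bsub>Q\<^esub> k0 = \<phi> ?y"
      using dv phyC k0 unfolding divisible_def by blast
    have grpB: "group (G\<lparr>carrier := B\<rparr>)" using subgroup_imp_group[OF less.prems(1)] .
    interpret h: group_hom "G\<lparr>carrier := B\<rparr>" Q \<phi>
      using grpB less.prems(3) Q.group_axioms by (simp add: group_hom_def group_hom_axioms_def)
    have cond: "\<phi> (x [^] k) = r [^]\<^bsub>Q\<^esub> k" if kB: "x [^] k \<in> B" for k :: int
    proof -
      define j where "j = k div int k0"
      define m where "m = k mod int k0"
      have km: "k = int k0 * j + m" unfolding j_def m_def by simp
      have m0: "0 \<le> m" "m < int k0" using k0 unfolding m_def by auto
      have "x [^] k = x [^] (int k0 * j) \<otimes> x [^] m" using km x(1) by (simp add: int_pow_mult)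
      also have "x [^] (int k0 * j) = ?y [^] j" using x(1) by (simp add: int_pow_pow[symmetric] int_pow_int)
      finally have xk: "x [^] k = ?y [^] j \<otimes> x [^] m" .
      have yjB: "?y [^] j \<in> B" using subgroup_int_pow_closed[OF less.prems(1) yB] .
      have yjC: "?y [^] j \<in> carrier G" using yjB sub by blast
      have "x [^] m = inv (?y [^] j) \<otimes> x [^] k" using xk yjC x(1) by simp
      then have xmB: "x [^] m \<in> B"
        using subgroup.m_closed[OF less.prems(1) subgroup.m_inv_closed[OF less.prems(1) yjB] kB] by simp
      have "m = 0"
      proof (rule ccontr)
        assume "m \<noteq> 0"
        then have "0 < nat m" "nat m < k0" using m0 by auto
        moreover have "x [^] (nat m) \<in> B" using xmB m0 by (metis int_nat_eq int_pow_int)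
        ultimately show False using kmin by blast
      qed
      then have xk2: "x [^] k = ?y [^] j" using xk yjC by simp
      have "\<phi> (?y [^] j) = \<phi> (?y [^]\<^bsub>G\<lparr>carrier := B\<rparr>\<^esub> j)"
        using int_pow_consistent[OF less.prems(1) yB] by simp
      also have "\<dots> = (\<phi> ?y) [^]\<^bsub>Q\<^esub> j" using yB by (intro h.hom_int_pow) simp
      also have "\<dots> = (r [^]\<^bsub>Q\<^esub> (int k0)) [^]\<^bsub>Q\<^esub> j" using r by (simp add: int_pow_int)
      also have "\<dots> = r [^]\<^bsub>Q\<^esub> k" using r km \<open>m = 0\<close> by (simp add: Q.int_pow_pow)
      finally show ?thesis using xk2 by simp
    qed
    obtain \<Phi>1 where P1: "\<Phi>1 \<in> hom (G\<lparr>carrier := adj G B x\<rparr>) Q" "\<forall>b\<in>B. \<Phi>1 b = \<phi> b"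
      using ext_step[OF Q less.prems(1,2,3,4) x(1) r(1) cond] by blast
    have A: "subgroup (adj G B x) G" "B \<subseteq> adj G B x" "x \<in> adj G B x"
      using adj_subgroup[OF less.prems(1,2) x(1)] by auto
    have lt: "card (carrier G - adj G B x) < card (carrier G - B)"
    proof (rule psubset_card_mono)
      show "finite (carrier G - B)" using fin by simp
      show "carrier G - adj G B x \<subset> carrier G - B" using A x by blast
    qed
    have D': "derived G (carrier G) \<subseteq> adj G B x" using less.prems(2) A by blast
    have K': "\<forall>d\<in>derived G (carrier G). \<Phi>1 d = \<one>\<^bsub>Q\<^esub>" using less.prems(2,4) P1(2) by auto
    obtain \<Phi> where "\<Phi> \<in> hom G Q" "\<forall>b\<in>adj G B x. \<Phi> b = \<Phi>1 b"
      using less.hyps[OF lt A(1) D' P1(1) K'] by blast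
    then have "\<forall>b\<in>B. \<Phi> b = \<phi> b" using P1(2) A(2) by (metis subsetD)
    then show ?thesis using \<open>\<Phi> \<in> hom G Q\<close> by blast
  qed
qed

end

lemma (in comm_group) char_sep:
  assumes fin: "finite (carrier G)" and i: "i \<in> carrier G" "i \<noteq> \<one>"
  shows "\<exists>\<chi>. \<chi> \<in> hom G (circ :: ('j \<Rightarrow> real) monoid) \<and> \<chi> i = (\<lambda>j. 1 / real (ord i))"
proof -
  let ?C = "circ :: ('j \<Rightarrow> real) monoid"
  interpret C: comm_group ?C by (rule circ_comm_group)
  have o2: "ord i \<ge> 2"
  proof -
    have "ord i \<ge> 1" using ord_ge_1[OF fin i(1)] .
    moreover have "ord i \<noteq> 1" using ord_eq_1[OF i(1)] i(2) by simp
    ultimately show ?thesis by simp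
  qed
  let ?q = "(\<lambda>j::'j. 1 / real (ord i))"
  have qC: "?q \<in> carrier ?C" using o2 by (simp add: circ_carrier)
  have D: "derived G (carrier G) \<subseteq> {\<one>}" using derived_eq_singleton by simp
  have phi: "(\<lambda>_. \<one>\<^bsub>?C\<^esub>) \<in> hom (G\<lparr>carrier := {\<one>}\<rparr>) ?C" by (simp add: hom_def)
  have kill: "\<forall>d\<in>derived G (carrier G). (\<lambda>_. \<one>\<^bsub>?C\<^esub>) d = \<one>\<^bsub>?C\<^esub>" by simp
  have cond: "(\<lambda>_. \<one>\<^bsub>?C\<^esub>) (i [^] k) = ?q [^]\<^bsub>?C\<^esub> k" if "i [^] k \<in> {\<one>}" for k :: int
  proof -
    have "int (ord i) dvd k" using that int_pow_eq_id[OF i(1)] by simp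
    then obtain t where t: "k = int (ord i) * t" by (auto simp: dvd_def)
    have "real_of_int k * (1 / real (ord i)) = real_of_int t" using o2 t by simp
    then show ?thesis by (simp add: circ_int_pow[OF qC] circ_one)
  qed
  obtain \<Phi>1 where P1: "\<Phi>1 \<in> hom (G\<lparr>carrier := adj G {\<one>} i\<rparr>) ?C" "\<Phi>1 i = ?q"
    using ext_step[OF circ_comm_group triv_subgroup D phi kill i(1) qC cond] by blast
  have A: "subgroup (adj G {\<one>} i) G" "i \<in> adj G {\<one>} i"
    using adj_subgroup[OF triv_subgroup D i(1)] by auto
  have K': "\<forall>d\<in>derived G (carrier G). \<Phi>1 d = \<one>\<^bsub>?C\<^esub>"
  proof
    fix d assume "d \<in> derived G (carrier G)"
    then have "d = \<one>" using D by blast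
    then show "\<Phi>1 d = \<one>\<^bsub>?C\<^esub>"
      using group_hom.hom_one[of "G\<lparr>carrier := adj G {\<one>} i\<rparr>" ?C \<Phi>1] P1(1)
        subgroup_imp_group[OF A(1)] C.group_axioms
      by (simp add: group_hom_def group_hom_axioms_def)
  qed
  have D': "derived G (carrier G) \<subseteq> adj G {\<one>} i" using D A(1) subgroup.one_closed by blast
  obtain \<chi> where "\<chi> \<in> hom G ?C" "\<forall>b\<in>adj G {\<one>} i. \<chi> b = \<Phi>1 b"
    using ext_all[OF fin circ_comm_group circ_divisible A(1) D' P1(1) K'] by blast
  then show ?thesis using P1(2) A(2) by auto
qed

locale cext =
  fixes P :: "('p, 'm) monoid_scheme" (structure) and H0 :: "('h, 'n) monoid_scheme" and \<pi> :: "'p \<Rightarrow> 'h"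
  assumes grpP: "group P" and grpH: "group H0" and fin: "finite (carrier P)"
    and homp: "\<pi> \<in> hom P H0" and surj: "\<pi> ` carrier P = carrier H0"
    and cent: "kernel P H0 \<pi> \<subseteq> group_center P"
begin

sublocale group P by (rule grpP)
sublocale gh: group_hom P H0 \<pi>
  using grpP grpH homp by (simp add: group_hom_def group_hom_axioms_def)

definition "NN = kernel P H0 \<pi>"
definition "DP = derived P (carrier P)"
definition "LL = DP \<inter> NN"

lemma NN_sub: "subgroup NN P" unfolding NN_def by (rule gh.subgroup_kernel)
lemma DP_sub: "subgroup DP P" unfolding DP_def by (rule derived_is_subgroup) simp
lemma LL_sub: "subgroup LL P" unfolding LL_def using NN_sub DP_sub by (rule subgroups_Inter_pair[rotated] | blast intro: subgroups_Inter_pair)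
lemma NN_central: "n \<in> NN \<Longrightarrow> g \<in> carrier P \<Longrightarrow> n \<otimes> g = g \<otimes> n"
  using cent unfolding NN_def group_center_def by blast
lemma NN_carr: "NN \<subseteq> carrier P" using NN_sub subgroup.subset by blast

definition "NG = P\<lparr>carrier := NN\<rparr>"

lemma NG_comm: "comm_group NG"
proof -
  have g: "group NG" unfolding NG_def using subgroup_imp_group[OF NN_sub] .
  show ?thesis
  proof (rule group.group_comm_groupI[OF g])
    fix x y assume "x \<in> carrier NG" "y \<in> carrier NG"
    then show "x \<otimes>\<^bsub>NG\<^esub> y = y \<otimes>\<^bsub>NG\<^esub> x" unfolding NG_def using NN_central NN_carr by auto
  qed
qed

lemma NG_fin: "finite (carrier NG)" unfolding NG_def using NN_carr fin finite_subset by auto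

definition chi :: "'p \<Rightarrow> 'p \<Rightarrow> ('p \<Rightarrow> real)" where
  "chi i = (SOME \<chi>. \<chi> \<in> hom NG circ \<and> (i \<in> NN \<and> i \<noteq> \<one> \<longrightarrow> \<chi> i = (\<lambda>j. 1 / real (group.ord NG i))))"

lemma chi_prop: "chi i \<in> hom NG circ \<and> (i \<in> NN \<and> i \<noteq> \<one> \<longrightarrow> chi i i = (\<lambda>j. 1 / real (group.ord NG i)))"
proof -
  have "\<exists>\<chi>. \<chi> \<in> hom NG circ \<and> (i \<in> NN \<and> i \<noteq> \<one> \<longrightarrow> \<chi> i = (\<lambda>j::'p. 1 / real (group.ord NG i)))"
  proof (cases "i \<in> NN \<and> i \<noteq> \<one>")
    case True
    have "i \<in> carrier NG" "i \<noteq> \<one>\<^bsub>NG\<^esub>" using True unfolding NG_def by auto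
    then show ?thesis using comm_group.char_sep[OF NG_comm NG_fin] True by blast
  next
    case False
    have "(\<lambda>_. \<one>\<^bsub>circ\<^esub>) \<in> hom NG (circ :: ('p \<Rightarrow> real) monoid)"
      by (simp add: hom_def circ_one circ_mult circ_carrier Pi_def)
    then show ?thesis using False by blast
  qed
  then show ?thesis unfolding chi_def by (rule someI_ex)
qed

definition ff :: "'p \<Rightarrow> ('p \<Rightarrow> real)" where
  "ff n = (\<lambda>j. chi j n j)"

lemma ff_hom: "ff \<in> hom NG circ"
proof (rule homI)
  fix n assume n: "n \<in> carrier NG"
  have "chi j n \<in> carrier circ" for j using chi_prop[of j] n by (auto simp: hom_def)
  then show "ff n \<in> carrier circ" unfolding ff_def circ_carrier by auto
next
  fix n m assume n: "n \<in> carrier NG" and m: "m \<in> carrier NG"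
  have "chi j (n \<otimes>\<^bsub>NG\<^esub> m) = chi j n \<otimes>\<^bsub>circ\<^esub> chi j m" for j
    using chi_prop[of j] n m by (auto simp: hom_def)
  then show "ff (n \<otimes>\<^bsub>NG\<^esub> m) = ff n \<otimes>\<^bsub>circ\<^esub> ff m"
    unfolding ff_def by (simp add: circ_mult)
qed

lemma ff_gh: "group_hom NG circ ff"
  using ff_hom comm_group.axioms(2)[OF NG_comm] circ_group
  by (simp add: group_hom_def group_hom_axioms_def)

lemma ff_inj: "inj_on ff NN"
proof -
  interpret fh: group_hom NG circ ff by (rule ff_gh)
  have "kernel NG circ ff = {\<one>\<^bsub>NG\<^esub>}"
  proof
    show "kernel NG circ ff \<subseteq> {\<one>\<^bsub>NG\<^esub>}"
    proof
      fix n assume "n \<in> kernel NG circ ff"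
      then have n: "n \<in> NN" "ff n = (\<lambda>i. 0)" unfolding kernel_def NG_def by (auto simp: circ_one)
      show "n \<in> {\<one>\<^bsub>NG\<^esub>}"
      proof (rule ccontr)
        assume "n \<notin> {\<one>\<^bsub>NG\<^esub>}"
        then have "n \<noteq> \<one>" unfolding NG_def by simp
        then have "chi n n n = 1 / real (group.ord NG n)" using chi_prop[of n] n(1) by simp
        moreover have "group.ord NG n \<ge> 1"
          using group.ord_ge_1[OF comm_group.axioms(2)[OF NG_comm] NG_fin] n(1) unfolding NG_def by simp
        ultimately have "chi n n n \<noteq> 0" by simp
        then show False using n(2) unfolding ff_def by (metis fun_cong)
      qed
    qed
    show "{\<one>\<^bsub>NG\<^esub>} \<subseteq> kernel NG circ ff" unfolding kernel_def using fh.hom_one by simp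
  qed
  then have "inj_on ff (carrier NG)" by (rule fh.trivial_ker_imp_inj)
  then show ?thesis unfolding NG_def by simp
qed

end

context cext
begin

definition "FF = ff ` LL"
definition "QQ = (circ :: ('p \<Rightarrow> real) monoid) Mod FF"
definition "kap = (\<lambda>a. FF #>\<^bsub>(circ :: ('p \<Rightarrow> real) monoid)\<^esub> a)"

lemma LL_NN: "LL \<subseteq> NN" unfolding LL_def by blast

lemma FF_sub: "subgroup FF (circ :: ('p \<Rightarrow> real) monoid)"
proof -
  have "subgroup LL NG" unfolding NG_def by (rule subgroup_incl[OF LL_sub NN_sub LL_NN])
  then show ?thesis unfolding FF_def by (rule group_hom.subgroup_img_is_subgroup[OF ff_gh])
qed

lemma FF_card: "card FF = card LL"
  unfolding FF_def using ff_inj LL_NN by (meson card_image inj_on_subset)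

lemma FF_normal: "FF \<lhd> (circ :: ('p \<Rightarrow> real) monoid)"
  using comm_group.normal_iff_subgroup[OF circ_comm_group] FF_sub by blast

lemma QQ_comm: "comm_group QQ"
  unfolding QQ_def by (rule comm_group.abelian_FactGroup[OF circ_comm_group FF_sub])

lemma QQ_group: "group QQ" using QQ_comm comm_group.axioms(2) by blast

lemma kap_hom: "kap \<in> hom circ QQ"
  unfolding kap_def QQ_def by (rule normal.r_coset_hom_Mod[OF FF_normal])

lemma kap_gh: "group_hom circ QQ kap"
  using kap_hom circ_group QQ_group by (simp add: group_hom_def group_hom_axioms_def)

lemma QQ_carrier: "carrier QQ = {FF #>\<^bsub>circ\<^esub> a | a. a \<in> carrier (circ :: ('p \<Rightarrow> real) monoid)}"
  unfolding QQ_def FactGroup_def RCOSETS_def by auto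

lemma QQ_div: "divisible QQ"
  unfolding divisible_def
proof (intro ballI allI impI)
  fix Y0 n assume Y0: "Y0 \<in> carrier QQ" and n: "(n::nat) > 0"
  then obtain d where d: "d \<in> carrier (circ :: ('p \<Rightarrow> real) monoid)" "Y0 = kap d"
    unfolding QQ_carrier kap_def by blast
  obtain r where r: "r \<in> carrier (circ :: ('p \<Rightarrow> real) monoid)" "r [^]\<^bsub>circ\<^esub> n = d"
    using circ_divisible d(1) n unfolding divisible_def by blast
  have "kap r [^]\<^bsub>QQ\<^esub> n = kap (r [^]\<^bsub>circ\<^esub> n)"
    using group_hom.hom_nat_pow[OF kap_gh r(1)] by simp
  then have "kap r [^]\<^bsub>QQ\<^esub> n = Y0" using r d by simp
  moreover have "kap r \<in> carrier QQ" using kap_hom r(1) by (auto simp: hom_def)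
  ultimately show "\<exists>r\<in>carrier QQ. r [^]\<^bsub>QQ\<^esub> n = Y0" by blast
qed

lemma kap_eq:
  assumes "a \<in> carrier (circ :: ('p \<Rightarrow> real) monoid)" "b \<in> carrier (circ :: ('p \<Rightarrow> real) monoid)"
    and "inv\<^bsub>circ\<^esub> b \<otimes>\<^bsub>circ\<^esub> a \<in> FF"
  shows "kap a = kap b"
proof -
  interpret C: comm_group "circ :: ('p \<Rightarrow> real) monoid" by (rule circ_comm_group)
  have "a \<otimes>\<^bsub>circ\<^esub> inv\<^bsub>circ\<^esub> b \<in> FF" using assms C.m_comm by simp
  then have "a \<in> FF #>\<^bsub>circ\<^esub> b" using subgroup.rcos_module_rev[OF FF_sub circ_group assms(2,1)] by simp
  then show ?thesis unfolding kap_def using C.repr_independence[OF _ assms(2) FF_sub] by simp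
qed

lemma ff_inv: "n \<in> NN \<Longrightarrow> ff (inv n) = inv\<^bsub>circ\<^esub> (ff n)"
  using group_hom.hom_inv[OF ff_gh, of n] m_inv_consistent[OF NN_sub] unfolding NG_def by simp

lemma ff_mult: "n \<in> NN \<Longrightarrow> m \<in> NN \<Longrightarrow> ff (n \<otimes> m) = ff n \<otimes>\<^bsub>circ\<^esub> ff m"
  using ff_hom unfolding NG_def by (simp add: hom_def)

lemma ff_carr: "n \<in> NN \<Longrightarrow> ff n \<in> carrier circ"
  using ff_hom unfolding NG_def by (auto simp: hom_def)

lemma ff_one: "ff \<one> = \<one>\<^bsub>circ\<^esub>"
  using group_hom.hom_one[OF ff_gh] unfolding NG_def by simp

definition "B0 = {n \<otimes> d | n d. n \<in> NN \<and> d \<in> DP}"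

lemma DP_carr: "DP \<subseteq> carrier P" using DP_sub subgroup.subset by blast

lemma B0_sub: "subgroup B0 P"
proof (rule subgroupI)
  show "B0 \<subseteq> carrier P" unfolding B0_def using NN_carr DP_carr by auto
  show "B0 \<noteq> {}" unfolding B0_def using subgroup.one_closed[OF NN_sub] subgroup.one_closed[OF DP_sub] by blast
next
  fix z assume "z \<in> B0"
  then obtain n d where nd: "n \<in> NN" "d \<in> DP" "z = n \<otimes> d" unfolding B0_def by blast
  have c: "n \<in> carrier P" "d \<in> carrier P" using nd NN_carr DP_carr by auto
  have "inv z = inv d \<otimes> inv n" using nd c by (simp add: inv_mult_group)
  also have "\<dots> = inv n \<otimes> inv d"
    using NN_central[OF subgroup.m_inv_closed[OF NN_sub nd(1)]] c by simp
  finally show "inv z \<in> B0" unfolding B0_def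
    using subgroup.m_inv_closed[OF NN_sub nd(1)] subgroup.m_inv_closed[OF DP_sub nd(2)] by blast
next
  fix z w assume "z \<in> B0" "w \<in> B0"
  then obtain n d n' d' where nd: "n \<in> NN" "d \<in> DP" "z = n \<otimes> d" "n' \<in> NN" "d' \<in> DP" "w = n' \<otimes> d'"
    unfolding B0_def by blast
  have c: "n \<in> carrier P" "d \<in> carrier P" "n' \<in> carrier P" "d' \<in> carrier P" using nd NN_carr DP_carr by auto
  have "z \<otimes> w = n \<otimes> (d \<otimes> n') \<otimes> d'" using nd c by (simp add: m_assoc)
  also have "\<dots> = n \<otimes> (n' \<otimes> d) \<otimes> d'" using NN_central[OF nd(4) c(2)] by simp
  also have "\<dots> = (n \<otimes> n') \<otimes> (d \<otimes> d')" using c by (simp add: m_assoc)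
  finally show "z \<otimes> w \<in> B0" unfolding B0_def
    using subgroup.m_closed[OF NN_sub nd(1,4)] subgroup.m_closed[OF DP_sub nd(2,5)] by blast
qed

lemma wd0:
  assumes "n \<in> NN" "d \<in> DP" "n' \<in> NN" "d' \<in> DP" "n \<otimes> d = n' \<otimes> d'"
  shows "kap (ff n) = kap (ff n')"
proof -
  have c: "n \<in> carrier P" "d \<in> carrier P" "n' \<in> carrier P" "d' \<in> carrier P" using assms NN_carr DP_carr by auto
  have "inv n' \<otimes> n = inv n' \<otimes> (n \<otimes> d) \<otimes> inv d" using c by (simp add: m_assoc)
  also have "\<dots> = d' \<otimes> inv d" using assms(5) c by (simp add: m_assoc[symmetric])
  finally have e: "inv n' \<otimes> n = d' \<otimes> inv d" .
  have "inv n' \<otimes> n \<in> NN" using subgroup.m_closed[OF NN_sub subgroup.m_inv_closed[OF NN_sub assms(3)] assms(1)] .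
  moreover have "inv n' \<otimes> n \<in> DP" using e subgroup.m_closed[OF DP_sub assms(4) subgroup.m_inv_closed[OF DP_sub assms(2)]] by simp
  ultimately have "inv n' \<otimes> n \<in> LL" unfolding LL_def by blast
  then have "ff (inv n' \<otimes> n) \<in> FF" unfolding FF_def by blast
  moreover have "ff (inv n' \<otimes> n) = inv\<^bsub>circ\<^esub> (ff n') \<otimes>\<^bsub>circ\<^esub> ff n"
    using ff_mult[OF subgroup.m_inv_closed[OF NN_sub assms(3)] assms(1)] ff_inv[OF assms(3)] by simp
  ultimately show ?thesis using kap_eq ff_carr assms(1,3) by simp
qed

definition "phi0 z = kap (ff (fst (SOME p. fst p \<in> NN \<and> snd p \<in> DP \<and> z = fst p \<otimes> snd p)))"

lemma phi0_eq: assumes "n \<in> NN" "d \<in> DP" shows "phi0 (n \<otimes> d) = kap (ff n)"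
proof -
  let ?P = "\<lambda>p. fst p \<in> NN \<and> snd p \<in> DP \<and> n \<otimes> d = fst p \<otimes> snd p"
  have ex: "\<exists>p. ?P p" using assms by (intro exI[of _ "(n, d)"]) simp
  define p where "p = (SOME p. ?P p)"
  have Pp: "?P p" unfolding p_def using someI_ex[OF ex] .
  have "phi0 (n \<otimes> d) = kap (ff (fst p))" unfolding phi0_def p_def by simp
  also have "\<dots> = kap (ff n)" using wd0[OF assms, of "fst p" "snd p"] Pp by simp
  finally show ?thesis .
qed

lemma phi0_hom: "phi0 \<in> hom (P\<lparr>carrier := B0\<rparr>) QQ"
proof (rule homI)
  fix z assume "z \<in> carrier (P\<lparr>carrier := B0\<rparr>)"
  then obtain n d where nd: "n \<in> NN" "d \<in> DP" "z = n \<otimes> d" unfolding B0_def by auto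
  show "phi0 z \<in> carrier QQ" using nd phi0_eq kap_hom ff_carr by (auto simp: hom_def)
next
  fix z w assume "z \<in> carrier (P\<lparr>carrier := B0\<rparr>)" "w \<in> carrier (P\<lparr>carrier := B0\<rparr>)"
  then obtain n d n' d' where nd: "n \<in> NN" "d \<in> DP" "z = n \<otimes> d" "n' \<in> NN" "d' \<in> DP" "w = n' \<otimes> d'"
    unfolding B0_def by auto
  have c: "n \<in> carrier P" "d \<in> carrier P" "n' \<in> carrier P" "d' \<in> carrier P" using nd NN_carr DP_carr by auto
  have "z \<otimes> w = n \<otimes> (d \<otimes> n') \<otimes> d'" using nd c by (simp add: m_assoc)
  also have "\<dots> = n \<otimes> (n' \<otimes> d) \<otimes> d'" using NN_central[OF nd(4) c(2)] by simp
  also have "\<dots> = (n \<otimes> n') \<otimes> (d \<otimes> d')" using c by (simp add: m_assoc)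
  finally have zw: "z \<otimes> w = (n \<otimes> n') \<otimes> (d \<otimes> d')" .
  have "phi0 (z \<otimes> w) = kap (ff (n \<otimes> n'))"
    using zw phi0_eq subgroup.m_closed[OF NN_sub nd(1,4)] subgroup.m_closed[OF DP_sub nd(2,5)] by simp
  also have "\<dots> = kap (ff n) \<otimes>\<^bsub>QQ\<^esub> kap (ff n')"
    using ff_mult[OF nd(1,4)] kap_hom ff_carr nd by (simp add: hom_def)
  also have "\<dots> = phi0 z \<otimes>\<^bsub>QQ\<^esub> phi0 w" using phi0_eq nd by simp
  finally show "phi0 (z \<otimes>\<^bsub>P\<lparr>carrier := B0\<rparr>\<^esub> w) = phi0 z \<otimes>\<^bsub>QQ\<^esub> phi0 w" by simp
qed

lemma phi0_kill: "\<forall>d\<in>derived P (carrier P). phi0 d = \<one>\<^bsub>QQ\<^esub>"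
proof
  fix d assume "d \<in> derived P (carrier P)"
  then have d: "d \<in> DP" unfolding DP_def .
  have "phi0 d = phi0 (\<one> \<otimes> d)" using d DP_carr by auto
  also have "\<dots> = kap (ff \<one>)" using phi0_eq[OF subgroup.one_closed[OF NN_sub] d] .
  also have "\<dots> = \<one>\<^bsub>QQ\<^esub>" using ff_one group_hom.hom_one[OF kap_gh] by simp
  finally show "phi0 d = \<one>\<^bsub>QQ\<^esub>" .
qed

lemma psi_ex: "\<exists>\<Psi>. \<Psi> \<in> hom P QQ \<and> (\<forall>n\<in>NN. \<Psi> n = kap (ff n))"
proof -
  have DB: "derived P (carrier P) \<subseteq> B0" unfolding B0_def DP_def[symmetric]
    using subgroup.one_closed[OF NN_sub] DP_carr by force
  obtain \<Psi> where \<Psi>: "\<Psi> \<in> hom P QQ" "\<forall>b\<in>B0. \<Psi> b = phi0 b"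
    using ext_all[OF fin QQ_comm QQ_div B0_sub DB phi0_hom phi0_kill] by blast
  have "\<forall>n\<in>NN. \<Psi> n = kap (ff n)"
  proof
    fix n assume n: "n \<in> NN"
    have nB: "n \<otimes> \<one> \<in> B0" unfolding B0_def using n subgroup.one_closed[OF DP_sub] by blast
    have "\<Psi> n = \<Psi> (n \<otimes> \<one>)" using n NN_carr by auto
    also have "\<dots> = kap (ff n)" using \<Psi>(2) nB phi0_eq[OF n subgroup.one_closed[OF DP_sub]] by simp
    finally show "\<Psi> n = kap (ff n)" .
  qed
  then show ?thesis using \<Psi>(1) by blast
qed

definition "psi = (SOME \<Psi>. \<Psi> \<in> hom P QQ \<and> (\<forall>n\<in>NN. \<Psi> n = kap (ff n)))"

lemma psi_hom: "psi \<in> hom P QQ" and psi_NN: "n \<in> NN \<Longrightarrow> psi n = kap (ff n)"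
  using someI_ex[OF psi_ex] unfolding psi_def[symmetric] by auto

end

lemma order_ext:
  assumes "group E" "group H" "h \<in> hom E H" "h ` carrier E = carrier H"
  shows "order E = order H * card (kernel E H h)"
proof -
  interpret gh: group_hom E H h using assms by (simp add: group_hom_def group_hom_axioms_def)
  have "bij_betw (\<lambda>Y0. the_elem (h ` Y0)) (carrier (E Mod kernel E H h)) (carrier H)"
    using gh.FactGroup_iso_set[OF assms(4)] by (simp add: iso_def)
  then have "card (carrier (E Mod kernel E H h)) = card (carrier H)" by (rule bij_betw_same_card)
  then have "card (rcosets\<^bsub>E\<^esub> kernel E H h) = order H" by (simp add: FactGroup_def order_def)
  moreover have "card (rcosets\<^bsub>E\<^esub> kernel E H h) * card (kernel E H h) = order E"
    by (rule group.lagrange[OF assms(1) gh.subgroup_kernel])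
  ultimately show ?thesis by simp
qed

context cext
begin

abbreviation "CC \<equiv> (circ :: ('p \<Rightarrow> real) monoid)"

lemma circ_comm: "a \<otimes>\<^bsub>CC\<^esub> b = b \<otimes>\<^bsub>CC\<^esub> a"
  by (simp add: circ_mult add.commute)

lemma PC_group: "group (P \<times>\<times> CC)" by (rule DirProd_group[OF grpP circ_group])

definition "SS = {(p, d). p \<in> carrier P \<and> d \<in> carrier CC \<and> kap d = psi p}"
definition "WW = (P \<times>\<times> CC)\<lparr>carrier := SS\<rparr>"
definition "RR = (\<lambda>n. (n, ff n)) ` NN"

lemma psi_gh: "group_hom P QQ psi"
  using psi_hom grpP QQ_group by (simp add: group_hom_def group_hom_axioms_def)

lemma SS_sub: "subgroup SS (P \<times>\<times> CC)"
proof -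
  interpret C: comm_group CC by (rule circ_comm_group)
  interpret k: group_hom CC QQ kap by (rule kap_gh)
  interpret s: group_hom P QQ psi by (rule psi_gh)
  show ?thesis
  proof (rule group.subgroupI[OF PC_group])
    show "SS \<subseteq> carrier (P \<times>\<times> CC)" unfolding SS_def by auto
    have "(\<one>, \<one>\<^bsub>CC\<^esub>) \<in> SS" unfolding SS_def by simp
    then show "SS \<noteq> {}" by blast
  next
    fix z assume z: "z \<in> SS"
    then obtain p d where pd: "z = (p, d)" "p \<in> carrier P" "d \<in> carrier CC" "kap d = psi p"
      unfolding SS_def by auto
    have "inv\<^bsub>P \<times>\<times> CC\<^esub> z = (inv p, inv\<^bsub>CC\<^esub> d)" using pd inv_DirProd[OF grpP circ_group] by simp
    moreover have "kap (inv\<^bsub>CC\<^esub> d) = psi (inv p)" using pd by simp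
    ultimately show "inv\<^bsub>P \<times>\<times> CC\<^esub> z \<in> SS" unfolding SS_def using pd by simp
  next
    fix z w assume "z \<in> SS" "w \<in> SS"
    then obtain p d p' d' where pd: "z = (p, d)" "p \<in> carrier P" "d \<in> carrier CC" "kap d = psi p"
      "w = (p', d')" "p' \<in> carrier P" "d' \<in> carrier CC" "kap d' = psi p'"
      unfolding SS_def by auto
    then show "z \<otimes>\<^bsub>P \<times>\<times> CC\<^esub> w \<in> SS" unfolding SS_def by simp
  qed
qed

lemma WW_group: "group WW" unfolding WW_def by (rule group.subgroup_imp_group[OF PC_group SS_sub])

lemma WW_carrier: "carrier WW = SS" unfolding WW_def by simp
lemma WW_mult2: "(p, d) \<otimes>\<^bsub>WW\<^esub> (p', d') = (p \<otimes> p', d \<otimes>\<^bsub>CC\<^esub> d')"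
  unfolding WW_def by simp
lemma WW_one: "\<one>\<^bsub>WW\<^esub> = (\<one>, \<one>\<^bsub>CC\<^esub>)" unfolding WW_def by simp
lemma WW_inv: "(p, d) \<in> SS \<Longrightarrow> inv\<^bsub>WW\<^esub> (p, d) = (inv p, inv\<^bsub>CC\<^esub> d)"
  unfolding WW_def using group.m_inv_consistent[OF PC_group SS_sub] inv_DirProd[OF grpP circ_group]
  by (auto simp: SS_def)

lemma lift_ex: "p \<in> carrier P \<Longrightarrow> \<exists>d. (p, d) \<in> SS"
proof -
  assume p: "p \<in> carrier P"
  have "psi p \<in> carrier QQ" using psi_hom p by (auto simp: hom_def)
  then obtain d where "d \<in> carrier CC" "psi p = kap d" unfolding QQ_carrier kap_def by blast
  then show ?thesis using p unfolding SS_def by auto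
qed

lemma RR_SS: "RR \<subseteq> SS"
  unfolding RR_def SS_def using NN_carr ff_carr psi_NN by auto

lemma RR_central: "z \<in> RR \<Longrightarrow> w \<in> SS \<Longrightarrow> z \<otimes>\<^bsub>WW\<^esub> w = w \<otimes>\<^bsub>WW\<^esub> z"
proof -
  assume z: "z \<in> RR" and w: "w \<in> SS"
  obtain n where n: "n \<in> NN" "z = (n, ff n)" using z unfolding RR_def by blast
  obtain p d where pd: "w = (p, d)" "p \<in> carrier P" "d \<in> carrier CC" using w unfolding SS_def by auto
  have "n \<otimes> p = p \<otimes> n" using NN_central[OF n(1) pd(2)] .
  moreover have "ff n \<otimes>\<^bsub>CC\<^esub> d = d \<otimes>\<^bsub>CC\<^esub> ff n" using circ_comm .
  ultimately show ?thesis using n pd by (simp add: WW_mult2)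
qed

lemma SS_central: "z \<in> SS \<Longrightarrow> fst z \<in> NN \<Longrightarrow> w \<in> SS \<Longrightarrow> z \<otimes>\<^bsub>WW\<^esub> w = w \<otimes>\<^bsub>WW\<^esub> z"
proof -
  assume z: "z \<in> SS" and zn: "fst z \<in> NN" and w: "w \<in> SS"
  obtain n e where n: "z = (n, e)" "e \<in> carrier CC" using z unfolding SS_def by auto
  obtain p d where pd: "w = (p, d)" "p \<in> carrier P" "d \<in> carrier CC" using w unfolding SS_def by auto
  have "n \<otimes> p = p \<otimes> n" using NN_central[of n p] zn n pd by simp
  moreover have "e \<otimes>\<^bsub>CC\<^esub> d = d \<otimes>\<^bsub>CC\<^esub> e" using circ_comm .
  ultimately show ?thesis using n pd by (simp add: WW_mult2)
qed

lemma RR_sub: "subgroup RR WW"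
proof (rule group.subgroupI[OF WW_group])
  show "RR \<subseteq> carrier WW" using RR_SS WW_carrier by simp
  show "RR \<noteq> {}" unfolding RR_def using subgroup.one_closed[OF NN_sub] by blast
next
  fix z assume "z \<in> RR"
  then obtain n where n: "n \<in> NN" "z = (n, ff n)" unfolding RR_def by blast
  have "(n, ff n) \<in> SS" using RR_SS n unfolding RR_def by blast
  then have "inv\<^bsub>WW\<^esub> z = (inv n, ff (inv n))" using n WW_inv ff_inv by simp
  then show "inv\<^bsub>WW\<^esub> z \<in> RR" unfolding RR_def using subgroup.m_inv_closed[OF NN_sub n(1)] by simp
next
  fix z w assume "z \<in> RR" "w \<in> RR"
  then obtain n m where n: "n \<in> NN" "z = (n, ff n)" "m \<in> NN" "w = (m, ff m)" unfolding RR_def by blast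
  have "z \<otimes>\<^bsub>WW\<^esub> w = (n \<otimes> m, ff (n \<otimes> m))" using n ff_mult WW_mult2 by simp
  then show "z \<otimes>\<^bsub>WW\<^esub> w \<in> RR" unfolding RR_def using subgroup.m_closed[OF NN_sub n(1,3)] by simp
qed

lemma RR_normal: "RR \<lhd> WW"
proof -
  interpret W: group WW by (rule WW_group)
  show ?thesis
  proof (subst W.normal_inv_iff, intro conjI RR_sub ballI)
    fix x h assume x: "x \<in> carrier WW" and h: "h \<in> RR"
    have hc: "h \<in> carrier WW" using h RR_SS WW_carrier by auto
    have "x \<otimes>\<^bsub>WW\<^esub> h = h \<otimes>\<^bsub>WW\<^esub> x" using RR_central[OF h] x WW_carrier by simp
    then have "x \<otimes>\<^bsub>WW\<^esub> h \<otimes>\<^bsub>WW\<^esub> inv\<^bsub>WW\<^esub> x = h" using x hc by (simp add: W.m_assoc)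
    then show "x \<otimes>\<^bsub>WW\<^esub> h \<otimes>\<^bsub>WW\<^esub> inv\<^bsub>WW\<^esub> x \<in> RR" using h by simp
  qed
qed

lemma DP_lift: "p \<in> DP \<Longrightarrow> (p, \<one>\<^bsub>CC\<^esub>) \<in> derived WW (carrier WW)"
proof -
  interpret W: group WW by (rule WW_group)
  interpret C: comm_group CC by (rule circ_comm_group)
  let ?T = "{p \<in> carrier P. (p, \<one>\<^bsub>CC\<^esub>) \<in> derived WW (carrier WW)}"
  have Dsub: "subgroup (derived WW (carrier WW)) WW" by (rule W.derived_is_subgroup) simp
  have Dcar: "derived WW (carrier WW) \<subseteq> SS" using subgroup.subset[OF Dsub] WW_carrier by simp
  have Tsub: "subgroup ?T P"
  proof (rule subgroupI)
    show "?T \<subseteq> carrier P" by blast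
    have "(\<one>, \<one>\<^bsub>CC\<^esub>) \<in> derived WW (carrier WW)" using subgroup.one_closed[OF Dsub] WW_one by simp
    then show "?T \<noteq> {}" by blast
  next
    fix p assume p: "p \<in> ?T"
    then have "(p, \<one>\<^bsub>CC\<^esub>) \<in> SS" using Dcar by blast
    then have "inv\<^bsub>WW\<^esub> (p, \<one>\<^bsub>CC\<^esub>) = (inv p, \<one>\<^bsub>CC\<^esub>)" using WW_inv by simp
    then show "inv p \<in> ?T" using subgroup.m_inv_closed[OF Dsub] p by force
  next
    fix p p' assume p: "p \<in> ?T" "p' \<in> ?T"
    have "(p, \<one>\<^bsub>CC\<^esub>) \<otimes>\<^bsub>WW\<^esub> (p', \<one>\<^bsub>CC\<^esub>) = (p \<otimes> p', \<one>\<^bsub>CC\<^esub>)" by (simp add: WW_mult2)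
    then show "p \<otimes> p' \<in> ?T" using subgroup.m_closed[OF Dsub] p by force
  qed
  have "derived_set P (carrier P) \<subseteq> ?T"
  proof
    fix c assume "c \<in> derived_set P (carrier P)"
    then obtain a b where ab: "a \<in> carrier P" "b \<in> carrier P" "c = a \<otimes> b \<otimes> inv a \<otimes> inv b" by blast
    obtain da db where d: "(a, da) \<in> SS" "(b, db) \<in> SS" using lift_ex ab by blast
    have dc: "da \<in> carrier CC" "db \<in> carrier CC" using d unfolding SS_def by auto
    have "(a, da) \<otimes>\<^bsub>WW\<^esub> (b, db) \<otimes>\<^bsub>WW\<^esub> inv\<^bsub>WW\<^esub> (a, da) \<otimes>\<^bsub>WW\<^esub> inv\<^bsub>WW\<^esub> (b, db)
          = (c, da \<otimes>\<^bsub>CC\<^esub> db \<otimes>\<^bsub>CC\<^esub> inv\<^bsub>CC\<^esub> da \<otimes>\<^bsub>CC\<^esub> inv\<^bsub>CC\<^esub> db)"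
      using d ab by (simp add: WW_inv WW_mult2)
    also have "da \<otimes>\<^bsub>CC\<^esub> db \<otimes>\<^bsub>CC\<^esub> inv\<^bsub>CC\<^esub> da \<otimes>\<^bsub>CC\<^esub> inv\<^bsub>CC\<^esub> db = \<one>\<^bsub>CC\<^esub>"
    proof -
      have "da \<otimes>\<^bsub>CC\<^esub> db \<otimes>\<^bsub>CC\<^esub> inv\<^bsub>CC\<^esub> da \<otimes>\<^bsub>CC\<^esub> inv\<^bsub>CC\<^esub> db
          = (da \<otimes>\<^bsub>CC\<^esub> (db \<otimes>\<^bsub>CC\<^esub> inv\<^bsub>CC\<^esub> da)) \<otimes>\<^bsub>CC\<^esub> inv\<^bsub>CC\<^esub> db"
        using dc by (simp add: C.m_assoc)
      also have "db \<otimes>\<^bsub>CC\<^esub> inv\<^bsub>CC\<^esub> da = inv\<^bsub>CC\<^esub> da \<otimes>\<^bsub>CC\<^esub> db" by (rule circ_comm)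
      also have "da \<otimes>\<^bsub>CC\<^esub> (inv\<^bsub>CC\<^esub> da \<otimes>\<^bsub>CC\<^esub> db) = db" using dc by (simp add: C.m_assoc[symmetric])
      also have "db \<otimes>\<^bsub>CC\<^esub> inv\<^bsub>CC\<^esub> db = \<one>\<^bsub>CC\<^esub>" using dc by simp
      finally show ?thesis .
    qed
    finally have eq: "(a, da) \<otimes>\<^bsub>WW\<^esub> (b, db) \<otimes>\<^bsub>WW\<^esub> inv\<^bsub>WW\<^esub> (a, da) \<otimes>\<^bsub>WW\<^esub> inv\<^bsub>WW\<^esub> (b, db)
          = (c, \<one>\<^bsub>CC\<^esub>)" .
    have "(c, \<one>\<^bsub>CC\<^esub>) \<in> derived_set WW (carrier WW)"
      using d WW_carrier eq[symmetric] by blast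
    then have "(c, \<one>\<^bsub>CC\<^esub>) \<in> derived WW (carrier WW)"
      unfolding derived_def by (rule generate.incl)
    then show "c \<in> ?T" using ab by simp
  qed
  then have "generate P (derived_set P (carrier P)) \<subseteq> ?T" by (rule generate_subgroup_incl[OF _ Tsub])
  then have "DP \<subseteq> ?T" unfolding DP_def derived_def[of P] .
  then show "p \<in> DP \<Longrightarrow> (p, \<one>\<^bsub>CC\<^esub>) \<in> derived WW (carrier WW)" by blast
qed

end

lemma transport_stem:
  fixes S :: "('s, 'x) monoid_scheme" and H0 :: "('h, 'n) monoid_scheme"
  assumes st: "stem_extension S H0 \<sigma>" and fin: "finite (carrier S)"
  shows "\<exists>(K::nat monoid) \<rho>. stem_extension K H0 \<rho> \<and> order K = order S"
proof -
  have ce: "central_extension S H0 \<sigma>" using st unfolding stem_extension_def by blast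
  have gS: "group S" and gH: "group H0" and hs: "\<sigma> \<in> hom S H0" and su: "\<sigma> ` carrier S = carrier H0"
    and kc: "kernel S H0 \<sigma> \<subseteq> group_center S"
    using ce unfolding central_extension_def by auto
  have kd: "kernel S H0 \<sigma> \<subseteq> derived S (carrier S)" using st unfolding stem_extension_def by blast
  interpret S: group S by (rule gS)
  obtain g :: "'s \<Rightarrow> nat" where inj: "inj_on g (carrier S)"
    using finite_imp_inj_to_nat_seg[OF fin] by blast
  define \<psi> where "\<psi> = inv_into (carrier S) g"
  have pg: "\<psi> (g s) = s" if "s \<in> carrier S" for s using inj that unfolding \<psi>_def by simp
  define K :: "nat monoid" where "K = \<lparr>carrier = g ` carrier S, monoid.mult = (\<lambda>a b. g (\<psi> a \<otimes>\<^bsub>S\<^esub> \<psi> b)), one = g \<one>\<^bsub>S\<^esub>\<rparr>"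
  have Kc: "carrier K = g ` carrier S" unfolding K_def by simp
  have Km: "g s \<otimes>\<^bsub>K\<^esub> g t = g (s \<otimes>\<^bsub>S\<^esub> t)" if "s \<in> carrier S" "t \<in> carrier S" for s t
    unfolding K_def using that pg by simp
  have K1: "\<one>\<^bsub>K\<^esub> = g \<one>\<^bsub>S\<^esub>" unfolding K_def by simp
  have gK: "group K"
  proof (rule groupI)
    fix x y assume "x \<in> carrier K" "y \<in> carrier K"
    then obtain s t where "s \<in> carrier S" "t \<in> carrier S" "x = g s" "y = g t" unfolding Kc by blast
    then show "x \<otimes>\<^bsub>K\<^esub> y \<in> carrier K" using Km Kc by simp
  next
    show "\<one>\<^bsub>K\<^esub> \<in> carrier K" using K1 Kc by simp
  next
    fix x y z assume "x \<in> carrier K" "y \<in> carrier K" "z \<in> carrier K"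
    then obtain s t u where "s \<in> carrier S" "t \<in> carrier S" "u \<in> carrier S" "x = g s" "y = g t" "z = g u"
      unfolding Kc by blast
    then show "x \<otimes>\<^bsub>K\<^esub> y \<otimes>\<^bsub>K\<^esub> z = x \<otimes>\<^bsub>K\<^esub> (y \<otimes>\<^bsub>K\<^esub> z)" using Km by (simp add: S.m_assoc)
  next
    fix x assume "x \<in> carrier K"
    then obtain s where "s \<in> carrier S" "x = g s" unfolding Kc by blast
    then show "\<one>\<^bsub>K\<^esub> \<otimes>\<^bsub>K\<^esub> x = x" using Km K1 by simp
  next
    fix x assume "x \<in> carrier K"
    then obtain s where s: "s \<in> carrier S" "x = g s" unfolding Kc by blast
    then have "g (inv\<^bsub>S\<^esub> s) \<otimes>\<^bsub>K\<^esub> x = \<one>\<^bsub>K\<^esub>" using Km K1 by simp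
    moreover have "g (inv\<^bsub>S\<^esub> s) \<in> carrier K" using s Kc by simp
    ultimately show "\<exists>y\<in>carrier K. y \<otimes>\<^bsub>K\<^esub> x = \<one>\<^bsub>K\<^esub>" by blast
  qed
  have ghom: "g \<in> hom S K" using Km Kc by (intro homI) auto
  interpret gh: group_hom S K g using gS gK ghom by (simp add: group_hom_def group_hom_axioms_def)
  have der: "derived K (carrier K) = g ` derived S (carrier S)"
    using gh.derived_img[of "carrier S"] Kc by simp
  define \<rho> where "\<rho> = (\<lambda>a. \<sigma> (\<psi> a))"
  have rg: "\<rho> (g s) = \<sigma> s" if "s \<in> carrier S" for s using pg that unfolding \<rho>_def by simp
  have rhom: "\<rho> \<in> hom K H0"
  proof (rule homI)
    fix x assume "x \<in> carrier K"
    then obtain s where "s \<in> carrier S" "x = g s" unfolding Kc by blast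
    then show "\<rho> x \<in> carrier H0" using rg hs by (auto simp: hom_def)
  next
    fix x y assume "x \<in> carrier K" "y \<in> carrier K"
    then obtain s t where "s \<in> carrier S" "t \<in> carrier S" "x = g s" "y = g t" unfolding Kc by blast
    then have e: "x \<otimes>\<^bsub>K\<^esub> y = g (s \<otimes>\<^bsub>S\<^esub> t)" using Km by blast
    have st: "s \<in> carrier S" "t \<in> carrier S" by fact+
    have "\<rho> (x \<otimes>\<^bsub>K\<^esub> y) = \<sigma> (s \<otimes>\<^bsub>S\<^esub> t)" by (simp only: e rg[OF S.m_closed[OF st]])
    also have "\<dots> = \<sigma> s \<otimes>\<^bsub>H0\<^esub> \<sigma> t" using hs st by (simp add: hom_def)
    also have "\<dots> = \<rho> x \<otimes>\<^bsub>H0\<^esub> \<rho> y" using rg st \<open>x = g s\<close> \<open>y = g t\<close> by simp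
    finally show "\<rho> (x \<otimes>\<^bsub>K\<^esub> y) = \<rho> x \<otimes>\<^bsub>H0\<^esub> \<rho> y" .
  qed
  have rsurj: "\<rho> ` carrier K = carrier H0"
  proof -
    have "\<rho> ` carrier K = (\<lambda>s. \<rho> (g s)) ` carrier S" unfolding Kc by (simp add: image_image)
    also have "\<dots> = \<sigma> ` carrier S" using rg by (intro image_cong) auto
    finally show ?thesis using su by simp
  qed
  have ker: "kernel K H0 \<rho> = g ` kernel S H0 \<sigma>"
  proof
    show "kernel K H0 \<rho> \<subseteq> g ` kernel S H0 \<sigma>"
    proof
      fix x assume "x \<in> kernel K H0 \<rho>"
      then have x: "x \<in> carrier K" "\<rho> x = \<one>\<^bsub>H0\<^esub>" unfolding kernel_def by auto
      then obtain s where "s \<in> carrier S" "x = g s" unfolding Kc by blast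
      then show "x \<in> g ` kernel S H0 \<sigma>" using x rg unfolding kernel_def by auto
    qed
    show "g ` kernel S H0 \<sigma> \<subseteq> kernel K H0 \<rho>" using rg Kc unfolding kernel_def by auto
  qed
  have cen: "g ` group_center S \<subseteq> group_center K"
  proof
    fix x assume "x \<in> g ` group_center S"
    then obtain s where s: "s \<in> group_center S" "x = g s" by blast
    have sc: "s \<in> carrier S" using s unfolding group_center_def by blast
    show "x \<in> group_center K" unfolding group_center_def
    proof (intro CollectI conjI ballI)
      show "x \<in> carrier K" using sc s Kc by simp
      fix y assume "y \<in> carrier K"
      then obtain t where t: "t \<in> carrier S" "y = g t" unfolding Kc by blast
      have "s \<otimes>\<^bsub>S\<^esub> t = t \<otimes>\<^bsub>S\<^esub> s" using s(1) t(1) unfolding group_center_def by blast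
      then have "g (s \<otimes>\<^bsub>S\<^esub> t) = g (t \<otimes>\<^bsub>S\<^esub> s)" by (rule arg_cong)
      then show "x \<otimes>\<^bsub>K\<^esub> y = y \<otimes>\<^bsub>K\<^esub> x"
        by (simp only: s(2) t(2) Km[OF sc t(1)] Km[OF t(1) sc])
    qed
  qed
  have "stem_extension K H0 \<rho>"
    unfolding stem_extension_def central_extension_def
  proof (intro conjI gK gH rhom rsurj)
    show "kernel K H0 \<rho> \<subseteq> group_center K" using ker kc cen by blast
    then show "kernel K H0 \<rho> \<subseteq> group_center K \<inter> derived K (carrier K)" using ker kd der by blast
  qed
  moreover have "order K = order S" unfolding order_def Kc using card_image[OF inj] .
  ultimately show ?thesis by blast
qed

context cext
begin

definition "Sg = WW Mod RR"

lemma Sg_group: "group Sg" unfolding Sg_def by (rule normal.factorgroup_is_group[OF RR_normal])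

lemma Sg_carrier: "carrier Sg = {RR #>\<^bsub>WW\<^esub> z | z. z \<in> SS}"
  unfolding Sg_def FactGroup_def RCOSETS_def WW_carrier by auto

lemma Sg_mult: "z \<in> SS \<Longrightarrow> w \<in> SS \<Longrightarrow> (RR #>\<^bsub>WW\<^esub> z) \<otimes>\<^bsub>Sg\<^esub> (RR #>\<^bsub>WW\<^esub> w) = RR #>\<^bsub>WW\<^esub> (z \<otimes>\<^bsub>WW\<^esub> w)"
  unfolding Sg_def FactGroup_def using normal.rcos_sum[OF RR_normal] WW_carrier by simp

lemma pf_hom: "(\<lambda>z. \<pi> (fst z)) \<in> hom WW H0"
proof (rule homI)
  fix z assume "z \<in> carrier WW" then show "\<pi> (fst z) \<in> carrier H0"
    unfolding WW_carrier SS_def by auto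
next
  fix z w assume "z \<in> carrier WW" "w \<in> carrier WW"
  then have zw: "fst z \<in> carrier P" "fst w \<in> carrier P" unfolding WW_carrier SS_def by auto
  have "fst (z \<otimes>\<^bsub>WW\<^esub> w) = fst z \<otimes> fst w"
    by (cases z, cases w) (simp add: WW_mult2)
  then show "\<pi> (fst (z \<otimes>\<^bsub>WW\<^esub> w)) = \<pi> (fst z) \<otimes>\<^bsub>H0\<^esub> \<pi> (fst w)"
    using zw by simp
qed

lemma pf_gh: "group_hom WW H0 (\<lambda>z. \<pi> (fst z))"
  using pf_hom WW_group grpH by (simp add: group_hom_def group_hom_axioms_def)

lemma pf_surj: "(\<lambda>z. \<pi> (fst z)) ` carrier WW = carrier H0"
proof (rule equalityI)
  show "(\<lambda>z. \<pi> (fst z)) ` carrier WW \<subseteq> carrier H0"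
    using pf_hom by (rule hom_carrier)
next
  show "carrier H0 \<subseteq> (\<lambda>z. \<pi> (fst z)) ` carrier WW"
  proof (rule subsetI)
    fix h assume h: "h \<in> carrier H0"
    have "h \<in> \<pi> ` carrier P" using h surj by simp
    then obtain p where p: "p \<in> carrier P" "h = \<pi> p" by (rule imageE)
    obtain d where d: "(p, d) \<in> SS" using lift_ex[OF p(1)] by blast
    have "(p, d) \<in> carrier WW" using d WW_carrier by simp
    then show "h \<in> (\<lambda>z. \<pi> (fst z)) ` carrier WW" using p(2) by (intro image_eqI[of h _ "(p, d)"]) simp_all
  qed
qed

lemma RR_ker: "RR \<subseteq> kernel WW H0 (\<lambda>z. \<pi> (fst z))"
  unfolding RR_def kernel_def WW_carrier using RR_SS RR_def NN_def kernel_def by (auto simp: kernel_def)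

lemma sig_ex: "\<exists>sig. sig \<in> hom Sg H0 \<and> (\<forall>z\<in>SS. sig (RR #>\<^bsub>WW\<^esub> z) = \<pi> (fst z))"
proof -
  obtain sig where "sig \<in> hom (WW Mod RR) H0" "\<And>z. z \<in> carrier WW \<Longrightarrow> sig (RR #>\<^bsub>WW\<^esub> z) = \<pi> (fst z)"
    using group_hom.FactGroup_universal_kernel[OF pf_gh RR_normal RR_ker] by metis
  then show ?thesis unfolding Sg_def WW_carrier by blast
qed

definition "sig = (SOME sig. sig \<in> hom Sg H0 \<and> (\<forall>z\<in>SS. sig (RR #>\<^bsub>WW\<^esub> z) = \<pi> (fst z)))"

lemma sig_hom: "sig \<in> hom Sg H0" and sig_eq: "z \<in> SS \<Longrightarrow> sig (RR #>\<^bsub>WW\<^esub> z) = \<pi> (fst z)"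
  using someI_ex[OF sig_ex] unfolding sig_def[symmetric] by auto

lemma sig_surj: "sig ` carrier Sg = carrier H0"
proof (rule equalityI)
  show "sig ` carrier Sg \<subseteq> carrier H0" using sig_hom by (rule hom_carrier)
next
  show "carrier H0 \<subseteq> sig ` carrier Sg"
  proof (rule subsetI)
    fix h assume h: "h \<in> carrier H0"
    have "h \<in> \<pi> ` carrier P" using h surj by simp
    then obtain p where p: "p \<in> carrier P" "\<pi> p = h" by (metis imageE)
    obtain d where d: "(p, d) \<in> SS" using lift_ex[OF p(1)] by blast
    have "RR #>\<^bsub>WW\<^esub> (p, d) \<in> carrier Sg" using d Sg_carrier by blast
    moreover have "sig (RR #>\<^bsub>WW\<^esub> (p, d)) = h" using sig_eq[OF d] p by simp
    ultimately show "h \<in> sig ` carrier Sg" by force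
  qed
qed

lemma ker_elem:
  assumes "Y0 \<in> kernel Sg H0 sig"
  obtains z where "z \<in> SS" "fst z \<in> NN" "Y0 = RR #>\<^bsub>WW\<^esub> z"
proof -
  have "Y0 \<in> carrier Sg" "sig Y0 = \<one>\<^bsub>H0\<^esub>" using assms unfolding kernel_def by auto
  then obtain z where z: "z \<in> SS" "Y0 = RR #>\<^bsub>WW\<^esub> z" "\<pi> (fst z) = \<one>\<^bsub>H0\<^esub>"
    using Sg_carrier sig_eq by force
  then have "fst z \<in> NN" unfolding NN_def kernel_def SS_def by auto
  then show ?thesis using that z by blast
qed

lemma Sg_central: "kernel Sg H0 sig \<subseteq> group_center Sg"
proof
  fix Y0 assume "Y0 \<in> kernel Sg H0 sig"
  then obtain z where z: "z \<in> SS" "fst z \<in> NN" "Y0 = RR #>\<^bsub>WW\<^esub> z" by (rule ker_elem)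
  show "Y0 \<in> group_center Sg" unfolding group_center_def
  proof (intro CollectI conjI ballI)
    show "Y0 \<in> carrier Sg" using z Sg_carrier by blast
    fix Y1 assume "Y1 \<in> carrier Sg"
    then obtain w where w: "w \<in> SS" "Y1 = RR #>\<^bsub>WW\<^esub> w" using Sg_carrier by blast
    show "Y0 \<otimes>\<^bsub>Sg\<^esub> Y1 = Y1 \<otimes>\<^bsub>Sg\<^esub> Y0"
      using Sg_mult[OF z(1) w(1)] Sg_mult[OF w(1) z(1)] SS_central[OF z(1,2) w(1)] z(3) w(2) by simp
  qed
qed

lemma coset_char:
  assumes "n \<in> NN" "d \<in> carrier CC" "kap d = psi n"
  shows "d \<in> FF #>\<^bsub>CC\<^esub> ff n"
proof -
  have "d \<in> FF #>\<^bsub>CC\<^esub> d" using group.rcos_self[OF circ_group assms(2) FF_sub] .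
  moreover have "FF #>\<^bsub>CC\<^esub> d = FF #>\<^bsub>CC\<^esub> ff n" using assms psi_NN unfolding kap_def by simp
  ultimately show ?thesis by simp
qed

lemma Sg_derived: "kernel Sg H0 sig \<subseteq> derived Sg (carrier Sg)"
proof
  interpret W: group WW by (rule WW_group)
  interpret C: comm_group CC by (rule circ_comm_group)
  fix Y0 assume "Y0 \<in> kernel Sg H0 sig"
  then obtain z where z: "z \<in> SS" "fst z \<in> NN" "Y0 = RR #>\<^bsub>WW\<^esub> z" by (rule ker_elem)
  obtain n d where nd: "z = (n, d)" by (cases z)
  have n: "n \<in> NN" using z nd by simp
  have d: "d \<in> carrier CC" "kap d = psi n" using z nd unfolding SS_def by auto
  have fnC: "ff n \<in> carrier CC" using ff_carr[OF n] .
  have "d \<in> FF #>\<^bsub>CC\<^esub> ff n" using coset_char[OF n d] .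
  then have "d \<otimes>\<^bsub>CC\<^esub> inv\<^bsub>CC\<^esub> (ff n) \<in> FF"
    by (rule subgroup.rcos_module_imp[OF FF_sub circ_group fnC])
  then obtain l where l0: "d \<otimes>\<^bsub>CC\<^esub> inv\<^bsub>CC\<^esub> (ff n) = ff l" "l \<in> LL" unfolding FF_def by (rule imageE)
  have l: "l \<in> LL" "ff l = d \<otimes>\<^bsub>CC\<^esub> inv\<^bsub>CC\<^esub> (ff n)" using l0 by simp_all
  have lN: "l \<in> NN" using l LL_NN by blast
  have lD: "l \<in> DP" using l unfolding LL_def by blast
  have lc: "l \<in> carrier P" using lN NN_carr by blast
  have nc: "n \<in> carrier P" using n NN_carr by blast
  have ffnl: "ff (n \<otimes> l) = d"
  proof -
    have "ff (n \<otimes> l) = ff n \<otimes>\<^bsub>CC\<^esub> (d \<otimes>\<^bsub>CC\<^esub> inv\<^bsub>CC\<^esub> (ff n))" using ff_mult[OF n lN] l by simp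
    also have "\<dots> = d \<otimes>\<^bsub>CC\<^esub> (ff n \<otimes>\<^bsub>CC\<^esub> inv\<^bsub>CC\<^esub> (ff n))" using d fnC by (simp add: C.m_lcomm)
    also have "\<dots> = d" using d fnC by simp
    finally show ?thesis .
  qed
  have "(n \<otimes> l, d) = (\<lambda>n. (n, ff n)) (n \<otimes> l)" using ffnl by simp
  then have RRe: "(n \<otimes> l, d) \<in> RR" unfolding RR_def by (rule image_eqI[OF _ subgroup.m_closed[OF NN_sub n lN]])
  have il: "inv l \<in> LL" using subgroup.m_inv_closed[OF LL_sub l(1)] .
  have ilS: "(inv l, \<one>\<^bsub>CC\<^esub>) \<in> SS"
  proof -
    have "psi (inv l) = kap (ff (inv l))" using psi_NN il LL_NN by (simp add: subset_iff)
    also have "\<dots> = FF" unfolding kap_def using subgroup.rcos_const[OF FF_sub circ_group] il FF_def by blast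
    also have "\<dots> = kap \<one>\<^bsub>CC\<^esub>" unfolding kap_def
      using subgroup.rcos_const[OF FF_sub circ_group subgroup.one_closed[OF FF_sub]] by simp
    finally show ?thesis unfolding SS_def using lc by simp
  qed
  have eq: "(n, d) = (n \<otimes> l, d) \<otimes>\<^bsub>WW\<^esub> (inv l, \<one>\<^bsub>CC\<^esub>)"
    using nc lc d by (simp add: WW_mult2 m_assoc)
  have "(n, d) \<in> RR #>\<^bsub>WW\<^esub> (inv l, \<one>\<^bsub>CC\<^esub>)" unfolding r_coset_def using RRe eq by blast
  then have Yeq: "RR #>\<^bsub>WW\<^esub> (inv l, \<one>\<^bsub>CC\<^esub>) = Y0"
    using W.repr_independence[of "(n, d)" RR "(inv l, \<one>\<^bsub>CC\<^esub>)"] ilS WW_carrier RR_sub z(3) nd by simp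
  have "(inv l, \<one>\<^bsub>CC\<^esub>) \<in> derived WW (carrier WW)"
    using DP_lift subgroup.m_inv_closed[OF DP_sub lD] by blast
  moreover
  interpret q: group_hom WW Sg "\<lambda>z. RR #>\<^bsub>WW\<^esub> z"
    using normal.r_coset_hom_Mod[OF RR_normal] WW_group Sg_group unfolding Sg_def
    by (simp add: group_hom_def group_hom_axioms_def)
  have "(\<lambda>z. RR #>\<^bsub>WW\<^esub> z) ` carrier WW = carrier Sg" using Sg_carrier WW_carrier by auto
  then have "derived Sg (carrier Sg) = (\<lambda>z. RR #>\<^bsub>WW\<^esub> z) ` derived WW (carrier WW)"
    using q.derived_img[of "carrier WW"] by simp
  ultimately show "Y0 \<in> derived Sg (carrier Sg)" using Yeq by blast
qed

lemma Sg_stem: "stem_extension Sg H0 sig"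
  unfolding stem_extension_def central_extension_def
  using Sg_group grpH sig_hom sig_surj Sg_central Sg_derived by blast

end

context cext
begin

lemma card_rcos: assumes "a \<in> carrier CC" shows "card (FF #>\<^bsub>CC\<^esub> a) = card FF"
proof -
  have e: "FF #>\<^bsub>CC\<^esub> a = (\<lambda>x. x \<otimes>\<^bsub>CC\<^esub> a) ` FF" by (auto simp: r_coset_def)
  have "inj_on (\<lambda>x. x \<otimes>\<^bsub>CC\<^esub> a) FF"
    using inj_on_subset[OF group.inj_on_multc[OF circ_group assms] subgroup.subset[OF FF_sub]] .
  then show ?thesis unfolding e by (rule card_image)
qed

lemma KW_eq: "kernel WW H0 (\<lambda>z. \<pi> (fst z)) = Sigma NN (\<lambda>n. FF #>\<^bsub>CC\<^esub> ff n)"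
proof (rule equalityI)
  show "kernel WW H0 (\<lambda>z. \<pi> (fst z)) \<subseteq> Sigma NN (\<lambda>n. FF #>\<^bsub>CC\<^esub> ff n)"
  proof (rule subsetI)
    fix z assume z: "z \<in> kernel WW H0 (\<lambda>z. \<pi> (fst z))"
    obtain n d where nd: "z = (n, d)" by (cases z)
    have zS: "(n, d) \<in> SS" "\<pi> n = \<one>\<^bsub>H0\<^esub>" using z nd unfolding kernel_def WW_carrier by auto
    have n: "n \<in> NN" using zS unfolding NN_def kernel_def SS_def by auto
    have d: "d \<in> carrier CC" "kap d = psi n" using zS unfolding SS_def by auto
    show "z \<in> Sigma NN (\<lambda>n. FF #>\<^bsub>CC\<^esub> ff n)" using coset_char[OF n d] n nd by simp
  qed
next
  show "Sigma NN (\<lambda>n. FF #>\<^bsub>CC\<^esub> ff n) \<subseteq> kernel WW H0 (\<lambda>z. \<pi> (fst z))"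
  proof (rule subsetI)
    fix z assume z: "z \<in> Sigma NN (\<lambda>n. FF #>\<^bsub>CC\<^esub> ff n)"
    obtain n d where nd: "z = (n, d)" by (cases z)
    have n: "n \<in> NN" and d: "d \<in> FF #>\<^bsub>CC\<^esub> ff n" using z nd by auto
    have fc: "ff n \<in> carrier CC" using ff_carr[OF n] .
    have dc: "d \<in> carrier CC" using subgroup.elemrcos_carrier[OF FF_sub circ_group fc d] .
    have "FF #>\<^bsub>CC\<^esub> ff n = FF #>\<^bsub>CC\<^esub> d" using group.repr_independence[OF circ_group d fc FF_sub] .
    then have "kap d = psi n" using psi_NN[OF n] unfolding kap_def by simp
    moreover have "n \<in> carrier P" "\<pi> n = \<one>\<^bsub>H0\<^esub>" using n unfolding NN_def kernel_def by auto
    ultimately show "z \<in> kernel WW H0 (\<lambda>z. \<pi> (fst z))"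
      unfolding kernel_def WW_carrier SS_def using nd dc by simp
  qed
qed

lemma NN_fin: "finite NN" using finite_subset[OF NN_carr fin] .
lemma NN_pos: "card NN > 0" using NN_fin subgroup.one_closed[OF NN_sub] card_gt_0_iff by blast
lemma FF_fin: "finite FF" unfolding FF_def using finite_subset[OF LL_NN NN_fin] by simp

lemma card_KW: "card (kernel WW H0 (\<lambda>z. \<pi> (fst z))) = card NN * card FF"
proof -
  have "card (Sigma NN (\<lambda>n. FF #>\<^bsub>CC\<^esub> ff n)) = (\<Sum>n\<in>NN. card (FF #>\<^bsub>CC\<^esub> ff n))"
  proof (rule card_SigmaI[OF NN_fin])
    show "\<forall>a\<in>NN. finite (FF #>\<^bsub>CC\<^esub> ff a)"
    proof
      fix a assume "a \<in> NN"
      have "FF #>\<^bsub>CC\<^esub> ff a = (\<lambda>x. x \<otimes>\<^bsub>CC\<^esub> ff a) ` FF" by (auto simp: r_coset_def)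
      then show "finite (FF #>\<^bsub>CC\<^esub> ff a)" using FF_fin by simp
    qed
  qed
  also have "\<dots> = (\<Sum>n\<in>NN. card FF)" using card_rcos ff_carr by (intro sum.cong) auto
  also have "\<dots> = card NN * card FF" by simp
  finally show ?thesis using KW_eq by simp
qed

lemma card_RR: "card RR = card NN"
  unfolding RR_def by (rule card_image) (auto simp: inj_on_def)

lemma order_Sg: "order Sg = order H0 * card LL"
proof -
  have o1: "order WW = order H0 * (card NN * card FF)"
    using order_ext[OF WW_group grpH pf_hom pf_surj] card_KW by simp
  have o2: "card (rcosets\<^bsub>WW\<^esub> RR) * card RR = order WW"
    by (rule group.lagrange[OF WW_group RR_sub])
  have o3: "order Sg = card (rcosets\<^bsub>WW\<^esub> RR)" unfolding Sg_def order_def FactGroup_def by simp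
  have "card (rcosets\<^bsub>WW\<^esub> RR) * card NN = (order H0 * card FF) * card NN"
    using o1 o2 card_RR by (simp add: mult_ac)
  then have "card (rcosets\<^bsub>WW\<^esub> RR) = order H0 * card FF" using NN_pos by simp
  then have "order Sg = order H0 * card FF" using o3 by simp
  then show ?thesis using FF_card by simp
qed

lemma Sg_fin: "finite (carrier Sg)"
proof -
  have "finite (carrier H0)" using surj fin by (metis finite_imageI)
  moreover have "\<one>\<^bsub>H0\<^esub> \<in> carrier H0" using group.is_monoid[OF grpH] monoid.one_closed by blast
  ultimately have h: "order H0 > 0" unfolding order_def using card_gt_0_iff by blast
  have "finite LL" using finite_subset[OF LL_NN NN_fin] .
  moreover have "\<one> \<in> LL" using subgroup.one_closed[OF LL_sub] .
  ultimately have l: "card LL > 0" using card_gt_0_iff by blast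
  have "order Sg > 0" using order_Sg h l by simp
  then show ?thesis unfolding order_def by (rule card_ge_0_finite)
qed

theorem key: "\<exists>(K::nat monoid) \<rho>. stem_extension K H0 \<rho> \<and> order K = order H0 * card LL"
  using transport_stem[OF Sg_stem Sg_fin] order_Sg by auto

end

lemma card_lt_not_inj:
  assumes "finite A" "\<not> inj_on f A" shows "card (f ` A) < card A"
  using card_image_le[OF assms(1), of f] eq_card_imp_inj_on[OF assms(1), of f] assms(2) by linarith

lemma claimQ:
  fixes E :: "('e, 'x) monoid_scheme" and F :: "('f, 'y) monoid_scheme" and H0 :: "('h, 'n) monoid_scheme"
  assumes cE: "central_extension E H0 pE" and sE: "kernel E H0 pE \<subseteq> derived E (carrier E)"
    and cF: "central_extension F H0 pF"
    and finE: "finite (carrier E)" and finF: "finite (carrier F)"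
    and maxE: "\<forall>(K::nat monoid) \<rho>. stem_extension K H0 \<rho> \<longrightarrow> order K \<le> order E"
    and e: "e1 \<in> carrier E" "e2 \<in> carrier E" and f: "f1 \<in> carrier F" "f2 \<in> carrier F"
    and l1: "pE e1 = pF f1" and l2: "pE e2 = pF f2"
    and ce: "e1 \<otimes>\<^bsub>E\<^esub> e2 = e2 \<otimes>\<^bsub>E\<^esub> e1"
  shows "f1 \<otimes>\<^bsub>F\<^esub> f2 = f2 \<otimes>\<^bsub>F\<^esub> f1"
proof (rule ccontr)
  assume nc: "f1 \<otimes>\<^bsub>F\<^esub> f2 \<noteq> f2 \<otimes>\<^bsub>F\<^esub> f1"
  have gE: "group E" and gH: "group H0" and hE: "pE \<in> hom E H0" and suE: "pE ` carrier E = carrier H0"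
    and kcE: "kernel E H0 pE \<subseteq> group_center E"
    using cE unfolding central_extension_def by auto
  have gF: "group F" and hF: "pF \<in> hom F H0" and suF: "pF ` carrier F = carrier H0"
    and kcF: "kernel F H0 pF \<subseteq> group_center F"
    using cF unfolding central_extension_def by auto
  interpret E: group E by (rule gE)
  interpret F: group F by (rule gF)
  interpret H: group H0 by (rule gH)
  interpret hE: group_hom E H0 pE using gE gH hE by (simp add: group_hom_def group_hom_axioms_def)
  interpret hF: group_hom F H0 pF using gF gH hF by (simp add: group_hom_def group_hom_axioms_def)
  have gEF: "group (E \<times>\<times> F)" by (rule DirProd_group[OF gE gF])
  define PS where "PS = {(a, c). a \<in> carrier E \<and> c \<in> carrier F \<and> pE a = pF c}"
  define PP where "PP = (E \<times>\<times> F)\<lparr>carrier := PS\<rparr>"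
  have PSsub: "subgroup PS (E \<times>\<times> F)"
  proof (rule group.subgroupI[OF gEF])
    show "PS \<subseteq> carrier (E \<times>\<times> F)" unfolding PS_def by auto
    have "(\<one>\<^bsub>E\<^esub>, \<one>\<^bsub>F\<^esub>) \<in> PS" unfolding PS_def by simp
    then show "PS \<noteq> {}" by blast
  next
    fix z assume "z \<in> PS"
    then obtain a c where ac: "z = (a, c)" "a \<in> carrier E" "c \<in> carrier F" "pE a = pF c" unfolding PS_def by auto
    then show "inv\<^bsub>E \<times>\<times> F\<^esub> z \<in> PS" unfolding PS_def using inv_DirProd[OF gE gF] by simp
  next
    fix z w assume "z \<in> PS" "w \<in> PS"
    then obtain a c a' c' where ac: "z = (a, c)" "a \<in> carrier E" "c \<in> carrier F" "pE a = pF c"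
      "w = (a', c')" "a' \<in> carrier E" "c' \<in> carrier F" "pE a' = pF c'" unfolding PS_def by auto
    then show "z \<otimes>\<^bsub>E \<times>\<times> F\<^esub> w \<in> PS" unfolding PS_def by simp
  qed
  have gP: "group PP" unfolding PP_def by (rule group.subgroup_imp_group[OF gEF PSsub])
  interpret PG: group PP by (rule gP)
  have PPc: "carrier PP = PS" unfolding PP_def by simp
  have PPm: "(a, c) \<otimes>\<^bsub>PP\<^esub> (a', c') = (a \<otimes>\<^bsub>E\<^esub> a', c \<otimes>\<^bsub>F\<^esub> c')" for a c a' c' unfolding PP_def by simp
  have PP1: "\<one>\<^bsub>PP\<^esub> = (\<one>\<^bsub>E\<^esub>, \<one>\<^bsub>F\<^esub>)" unfolding PP_def by simp
  have PPi: "inv\<^bsub>PP\<^esub> (a, c) = (inv\<^bsub>E\<^esub> a, inv\<^bsub>F\<^esub> c)" if "(a, c) \<in> PS" for a c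
    unfolding PP_def using group.m_inv_consistent[OF gEF PSsub that] inv_DirProd[OF gE gF] that
    unfolding PS_def by auto
  have finP: "finite (carrier PP)"
  proof -
    have "PS \<subseteq> carrier E \<times> carrier F" unfolding PS_def by auto
    then show ?thesis unfolding PPc using finite_subset finE finF by blast
  qed
  define pP where "pP = (\<lambda>z::'e \<times> 'f. pE (fst z))"
  have hP: "pP \<in> hom PP H0"
  proof (rule homI)
    fix z assume "z \<in> carrier PP" then show "pP z \<in> carrier H0" unfolding pP_def PPc PS_def by auto
  next
    fix z w assume "z \<in> carrier PP" "w \<in> carrier PP"
    then show "pP (z \<otimes>\<^bsub>PP\<^esub> w) = pP z \<otimes>\<^bsub>H0\<^esub> pP w"
      unfolding pP_def PPc PS_def by (cases z, cases w) (simp add: PPm)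
  qed
  have suP: "pP ` carrier PP = carrier H0"
  proof (rule equalityI)
    show "pP ` carrier PP \<subseteq> carrier H0" using hP by (rule hom_carrier)
  next
    show "carrier H0 \<subseteq> pP ` carrier PP"
    proof (rule subsetI)
      fix h assume h: "h \<in> carrier H0"
      have "h \<in> pE ` carrier E" using h suE by simp
      then obtain a where a: "h = pE a" "a \<in> carrier E" by (rule imageE)
      have "h \<in> pF ` carrier F" using h suF by simp
      then obtain c where c: "h = pF c" "c \<in> carrier F" by (rule imageE)
      have "(a, c) \<in> carrier PP" unfolding PPc PS_def using a c by simp
      moreover have "h = pP (a, c)" unfolding pP_def using a by simp
      ultimately show "h \<in> pP ` carrier PP" by (rule rev_image_eqI)
    qed
  qed
  have kerP: "kernel PP H0 pP = {(a, c). a \<in> kernel E H0 pE \<and> c \<in> kernel F H0 pF}"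
    unfolding kernel_def PPc PS_def pP_def by auto
  have centP: "kernel PP H0 pP \<subseteq> group_center PP"
  proof (rule subsetI)
    fix z assume z: "z \<in> kernel PP H0 pP"
    then obtain a c where ac: "z = (a, c)" "a \<in> kernel E H0 pE" "c \<in> kernel F H0 pF" using kerP by auto
    have zc: "z \<in> carrier PP" using z unfolding kernel_def by simp
    have ca: "a \<in> group_center E" "c \<in> group_center F" using ac kcE kcF by auto
    show "z \<in> group_center PP" unfolding group_center_def
    proof (intro CollectI conjI ballI)
      show "z \<in> carrier PP" by (rule zc)
      fix w assume "w \<in> carrier PP"
      then obtain a' c' where w: "w = (a', c')" "a' \<in> carrier E" "c' \<in> carrier F" unfolding PPc PS_def by auto
      have "a \<otimes>\<^bsub>E\<^esub> a' = a' \<otimes>\<^bsub>E\<^esub> a" using ca(1) w(2) unfolding group_center_def by blast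
      moreover have "c \<otimes>\<^bsub>F\<^esub> c' = c' \<otimes>\<^bsub>F\<^esub> c" using ca(2) w(3) unfolding group_center_def by blast
      ultimately show "z \<otimes>\<^bsub>PP\<^esub> w = w \<otimes>\<^bsub>PP\<^esub> z" using ac w by (simp add: PPm)
    qed
  qed
  interpret C: cext PP H0 pP
    using gP gH finP hP suP centP by unfold_locales
  obtain K :: "nat monoid" and \<rho> where K: "stem_extension K H0 \<rho>" "order K = order H0 * card C.LL"
    using C.key by blast
  have oE: "order E = order H0 * card (kernel E H0 pE)" by (rule order_ext[OF gE gH hE suE])
  have h0: "order H0 > 0"
  proof -
    have "finite (carrier H0)" using suE finE by (metis finite_imageI)
    then show ?thesis unfolding order_def using H.one_closed card_gt_0_iff by blast
  qed
  have le: "card C.LL \<le> card (kernel E H0 pE)"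
    using maxE K oE h0 by (metis mult_le_cancel1 not_le)
  have LLe: "C.LL = derived PP (carrier PP) \<inter> kernel PP H0 pP"
    unfolding C.LL_def C.DP_def C.NN_def by simp
  have hfst: "fst \<in> hom PP E"
    by (rule homI) (auto simp: PPc PS_def PPm)
  interpret fh: group_hom PP E fst using gP gE hfst by (simp add: group_hom_def group_hom_axioms_def)
  have fstc: "fst ` carrier PP = carrier E"
  proof (rule equalityI)
    show "fst ` carrier PP \<subseteq> carrier E" unfolding PPc PS_def by auto
  next
    show "carrier E \<subseteq> fst ` carrier PP"
    proof (rule subsetI)
      fix a assume a: "a \<in> carrier E"
      have "pE a \<in> pF ` carrier F" using a suF hE by (auto simp: hom_def)
      then obtain c where c: "pE a = pF c" "c \<in> carrier F" by (rule imageE)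
      have "(a, c) \<in> carrier PP" unfolding PPc PS_def using a c by simp
      then show "a \<in> fst ` carrier PP" by (rule rev_image_eqI) simp
    qed
  qed
  have dimg: "derived E (carrier E) = fst ` derived PP (carrier PP)"
    using fh.derived_img[of "carrier PP"] fstc by simp
  have DPc: "derived PP (carrier PP) \<subseteq> carrier PP" by (rule PG.derived_in_carrier) simp
  have onto: "kernel E H0 pE \<subseteq> fst ` C.LL"
  proof (rule subsetI)
    fix a assume a: "a \<in> kernel E H0 pE"
    then have "a \<in> fst ` derived PP (carrier PP)" using sE dimg by blast
    then obtain x where x: "a = fst x" "x \<in> derived PP (carrier PP)" by (rule imageE)
    have xc: "x \<in> carrier PP" using x DPc by blast
    have "pP x = \<one>\<^bsub>H0\<^esub>" unfolding pP_def using x a unfolding kernel_def by simp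
    then have "x \<in> kernel PP H0 pP" using xc unfolding kernel_def by simp
    then have "x \<in> C.LL" using x LLe by blast
    then show "a \<in> fst ` C.LL" using x by blast
  qed
  have "C.LL \<subseteq> carrier PP" using LLe DPc by blast
  then have finLL: "finite C.LL" using finite_subset finP by blast
  let ?c = "(e1, f1) \<otimes>\<^bsub>PP\<^esub> (e2, f2) \<otimes>\<^bsub>PP\<^esub> inv\<^bsub>PP\<^esub> (e1, f1) \<otimes>\<^bsub>PP\<^esub> inv\<^bsub>PP\<^esub> (e2, f2)"
  have p1: "(e1, f1) \<in> carrier PP" "(e2, f2) \<in> carrier PP" unfolding PPc PS_def using e f l1 l2 by auto
  have cd: "?c \<in> derived PP (carrier PP)"
    unfolding derived_def using p1 by (intro generate.incl) blast
  have cform: "?c = (e1 \<otimes>\<^bsub>E\<^esub> e2 \<otimes>\<^bsub>E\<^esub> inv\<^bsub>E\<^esub> e1 \<otimes>\<^bsub>E\<^esub> inv\<^bsub>E\<^esub> e2,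
                     f1 \<otimes>\<^bsub>F\<^esub> f2 \<otimes>\<^bsub>F\<^esub> inv\<^bsub>F\<^esub> f1 \<otimes>\<^bsub>F\<^esub> inv\<^bsub>F\<^esub> f2)"
    using p1 PPi PPm unfolding PPc by simp
  have e1c: "e1 \<otimes>\<^bsub>E\<^esub> e2 \<otimes>\<^bsub>E\<^esub> inv\<^bsub>E\<^esub> e1 \<otimes>\<^bsub>E\<^esub> inv\<^bsub>E\<^esub> e2 = \<one>\<^bsub>E\<^esub>"
    using ce e by (simp add: E.m_assoc)
  have f1c: "f1 \<otimes>\<^bsub>F\<^esub> f2 \<otimes>\<^bsub>F\<^esub> inv\<^bsub>F\<^esub> f1 \<otimes>\<^bsub>F\<^esub> inv\<^bsub>F\<^esub> f2 \<noteq> \<one>\<^bsub>F\<^esub>"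
  proof
    assume "f1 \<otimes>\<^bsub>F\<^esub> f2 \<otimes>\<^bsub>F\<^esub> inv\<^bsub>F\<^esub> f1 \<otimes>\<^bsub>F\<^esub> inv\<^bsub>F\<^esub> f2 = \<one>\<^bsub>F\<^esub>"
    then have "f1 \<otimes>\<^bsub>F\<^esub> f2 = f2 \<otimes>\<^bsub>F\<^esub> f1" using f
      by (metis F.inv_closed F.m_closed F.inv_equality F.inv_mult_group F.inv_inv F.m_assoc)
    then show False using nc by simp
  qed
  have cc: "?c \<in> carrier PP" using cd DPc by blast
  have cker: "?c \<in> kernel PP H0 pP"
    using cc e1c cform unfolding kernel_def pP_def by simp
  have cLL: "?c \<in> C.LL" using cd cker LLe by blast
  have oLL: "\<one>\<^bsub>PP\<^esub> \<in> C.LL"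
    using LLe PG.one_closed subgroup.one_closed[OF PG.derived_is_subgroup[of "carrier PP"]]
      subgroup.one_closed[OF C.NN_sub] C.NN_def by auto
  have "?c \<noteq> \<one>\<^bsub>PP\<^esub>" using cform f1c PP1 by simp
  moreover have "fst ?c = fst \<one>\<^bsub>PP\<^esub>" using cform e1c PP1 by simp
  ultimately have "\<not> inj_on fst C.LL" using cLL oLL unfolding inj_on_def by blast
  then have "card (fst ` C.LL) < card C.LL" by (rule card_lt_not_inj[OF finLL])
  moreover have "card (kernel E H0 pE) \<le> card (fst ` C.LL)"
    using card_mono[OF finite_imageI[OF finLL] onto] .
  ultimately show False using le by simp
qed

theorem proposition3p2:
  fixes G :: "('a, 'm) monoid_scheme"
    and Gt :: "('b, 'n) monoid_scheme" and proj :: "'b \<Rightarrow> 'a"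
    and H :: "'a set"
    and K :: "('c, 'k) monoid_scheme" and rho :: "'c \<Rightarrow> 'a"
  assumes "group G" and "finite (carrier G)"
    and "schur_cover Gt G proj"
    and "subgroup H G" and "H \<noteq> carrier G"
    and "schur_cover K (G\<lparr>carrier := H\<rparr>) rho"
    and "(K\<lparr>carrier := kernel K (G\<lparr>carrier := H\<rparr>) rho\<rparr>) \<cong> (Gt\<lparr>carrier := kernel Gt G proj\<rparr>)"
    and "kernel Gt G proj \<subseteq> derived Gt (proj -` H \<inter> carrier Gt)"
  shows "induced_subgraph (deep_commuting_graph Gt proj G) H
           = deep_commuting_graph K rho (G\<lparr>carrier := H\<rparr>)"
proof -
  note gG = assms(1) and scG = assms(3) and sH = assms(4) and scK = assms(6) and isoK = assms(7)
    and kd = assms(8)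
  interpret G: group G by (rule gG)
  define H0 where "H0 = G\<lparr>carrier := H\<rparr>"
  define HS where "HS = proj -` H \<inter> carrier Gt"
  define Ht where "Ht = Gt\<lparr>carrier := HS\<rparr>"
  have Hc: "H \<subseteq> carrier G" using sH subgroup.subset by blast
  have gH0: "group H0" unfolding H0_def by (rule G.subgroup_imp_group[OF sH])
  have stGt: "stem_extension Gt G proj" and finGt: "finite (carrier Gt)"
    using scG unfolding schur_cover_def by auto
  have ceGt: "central_extension Gt G proj" using stGt unfolding stem_extension_def by blast
  have gGt: "group Gt" and hGt: "proj \<in> hom Gt G" and suGt: "proj ` carrier Gt = carrier G"
    and kcGt: "kernel Gt G proj \<subseteq> group_center Gt"
    using ceGt unfolding central_extension_def by auto
  interpret Gt: group Gt by (rule gGt)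
  interpret pj: group_hom Gt G proj using gGt gG hGt by (simp add: group_hom_def group_hom_axioms_def)
  have stK: "stem_extension K H0 rho" and finK: "finite (carrier K)"
    and maxK: "\<forall>(K'::nat monoid) \<rho>. stem_extension K' H0 \<rho> \<longrightarrow> order K' \<le> order K"
    using scK unfolding schur_cover_def H0_def by auto
  have ceK: "central_extension K H0 rho" and sdK: "kernel K H0 rho \<subseteq> derived K (carrier K)"
    using stK unfolding stem_extension_def by auto
  have gK: "group K" and hK: "rho \<in> hom K H0" and suK: "rho ` carrier K = carrier H0"
    using ceK unfolding central_extension_def by auto
  have H0c: "carrier H0 = H" unfolding H0_def by simp
  have HSsub: "subgroup HS Gt"
  proof (rule Gt.subgroupI)
    show "HS \<subseteq> carrier Gt" unfolding HS_def by blast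
    have "\<one>\<^bsub>Gt\<^esub> \<in> HS" unfolding HS_def using subgroup.one_closed[OF sH] by simp
    then show "HS \<noteq> {}" by blast
  next
    fix a assume "a \<in> HS" then show "inv\<^bsub>Gt\<^esub> a \<in> HS"
      unfolding HS_def using subgroup.m_inv_closed[OF sH] by auto
  next
    fix a b assume "a \<in> HS" "b \<in> HS" then show "a \<otimes>\<^bsub>Gt\<^esub> b \<in> HS"
      unfolding HS_def using subgroup.m_closed[OF sH] by auto
  qed
  have gHt: "group Ht" unfolding Ht_def by (rule Gt.subgroup_imp_group[OF HSsub])
  have finHt: "finite (carrier Ht)" unfolding Ht_def HS_def using finGt by simp
  have hHt: "proj \<in> hom Ht H0"
    by (rule homI) (auto simp: Ht_def HS_def H0_def)
  have suHt: "proj ` carrier Ht = carrier H0"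
  proof (rule equalityI)
    show "proj ` carrier Ht \<subseteq> carrier H0" using hHt by (rule hom_carrier)
  next
    show "carrier H0 \<subseteq> proj ` carrier Ht"
    proof (rule subsetI)
      fix h assume h: "h \<in> carrier H0"
      then have "h \<in> proj ` carrier Gt" using suGt Hc H0c by auto
      then obtain a where a: "h = proj a" "a \<in> carrier Gt" by (rule imageE)
      have "a \<in> carrier Ht" unfolding Ht_def HS_def using a h H0c by simp
      then show "h \<in> proj ` carrier Ht" using a(1) by blast
    qed
  qed
  have kerHt: "kernel Ht H0 proj = kernel Gt G proj"
    unfolding kernel_def Ht_def HS_def H0_def using subgroup.one_closed[OF sH] by auto
  have kcHt: "kernel Ht H0 proj \<subseteq> group_center Ht"
  proof (rule subsetI)
    fix z assume z: "z \<in> kernel Ht H0 proj"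
    then have zc: "z \<in> group_center Gt" "z \<in> HS" using kerHt kcGt unfolding kernel_def Ht_def by auto
    show "z \<in> group_center Ht" using zc unfolding group_center_def Ht_def HS_def by auto
  qed
  have ceHt: "central_extension Ht H0 proj"
    unfolding central_extension_def using gHt gH0 hHt suHt kcHt by blast
  have sdHt: "kernel Ht H0 proj \<subseteq> derived Ht (carrier Ht)"
  proof -
    have "derived Ht (carrier Ht) = derived Gt HS"
      unfolding Ht_def using Gt.derived_consistent[OF _ HSsub] by simp
    then show ?thesis using kerHt kd unfolding HS_def by simp
  qed
  have "card (carrier (K\<lparr>carrier := kernel K (G\<lparr>carrier := H\<rparr>) rho\<rparr>))
        = card (carrier (Gt\<lparr>carrier := kernel Gt G proj\<rparr>))"
    by (rule iso_same_card[OF isoK])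
  then have ck: "card (kernel K H0 rho) = card (kernel Gt G proj)" unfolding H0_def by simp
  have oK: "order K = order H0 * card (kernel K H0 rho)" by (rule order_ext[OF gK gH0 hK suK])
  have oHt: "order Ht = order H0 * card (kernel Ht H0 proj)" by (rule order_ext[OF gHt gH0 hHt suHt])
  have oeq: "order Ht = order K" using oK oHt ck kerHt by simp
  have maxHt: "\<forall>(K'::nat monoid) \<rho>. stem_extension K' H0 \<rho> \<longrightarrow> order K' \<le> order Ht"
    using maxK oeq by simp
  have HtK: "a \<otimes>\<^bsub>K\<^esub> b = b \<otimes>\<^bsub>K\<^esub> a"
    if "a' \<in> carrier Ht" "b' \<in> carrier Ht" "a \<in> carrier K" "b \<in> carrier K"
       "proj a' = rho a" "proj b' = rho b" "a' \<otimes>\<^bsub>Ht\<^esub> b' = b' \<otimes>\<^bsub>Ht\<^esub> a'" for a b a' b'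
    using claimQ[OF ceHt sdHt ceK finHt finK maxHt that] .
  have KHt: "a' \<otimes>\<^bsub>Ht\<^esub> b' = b' \<otimes>\<^bsub>Ht\<^esub> a'"
    if "a' \<in> carrier Ht" "b' \<in> carrier Ht" "a \<in> carrier K" "b \<in> carrier K"
       "proj a' = rho a" "proj b' = rho b" "a \<otimes>\<^bsub>K\<^esub> b = b \<otimes>\<^bsub>K\<^esub> a" for a b a' b'
    using claimQ[OF ceK sdK ceHt finK finHt maxK, of a b a' b'] that by simp
  have Htc: "carrier Ht = HS" and Htm: "a \<otimes>\<^bsub>Ht\<^esub> b = a \<otimes>\<^bsub>Gt\<^esub> b" for a b unfolding Ht_def by simp_all
  have liftGt: "\<exists>a\<in>carrier Gt. proj a = x" if "x \<in> H" for x
  proof -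
    have "x \<in> proj ` carrier Gt" using that suGt Hc by auto
    then obtain a where "x = proj a" "a \<in> carrier Gt" by (rule imageE)
    then show ?thesis by auto
  qed
  have liftK: "\<exists>a\<in>carrier K. rho a = x" if "x \<in> H" for x
  proof -
    have "x \<in> rho ` carrier K" using that suK H0c by auto
    then obtain a where "x = rho a" "a \<in> carrier K" by (rule imageE)
    then show ?thesis by auto
  qed
  have edge: "(\<forall>a\<in>carrier Gt. \<forall>b\<in>carrier Gt. proj a = x \<longrightarrow> proj b = y \<longrightarrow> a \<otimes>\<^bsub>Gt\<^esub> b = b \<otimes>\<^bsub>Gt\<^esub> a)
      \<longleftrightarrow> (\<forall>a\<in>carrier K. \<forall>b\<in>carrier K. rho a = x \<longrightarrow> rho b = y \<longrightarrow> a \<otimes>\<^bsub>K\<^esub> b = b \<otimes>\<^bsub>K\<^esub> a)"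
    if xy: "x \<in> H" "y \<in> H" for x y
  proof
    assume A: "\<forall>a\<in>carrier Gt. \<forall>b\<in>carrier Gt. proj a = x \<longrightarrow> proj b = y \<longrightarrow> a \<otimes>\<^bsub>Gt\<^esub> b = b \<otimes>\<^bsub>Gt\<^esub> a"
    show "\<forall>a\<in>carrier K. \<forall>b\<in>carrier K. rho a = x \<longrightarrow> rho b = y \<longrightarrow> a \<otimes>\<^bsub>K\<^esub> b = b \<otimes>\<^bsub>K\<^esub> a"
    proof (intro ballI impI)
      fix a b assume ab: "a \<in> carrier K" "b \<in> carrier K" "rho a = x" "rho b = y"
      obtain a' where a': "a' \<in> carrier Gt" "proj a' = x" using liftGt[OF xy(1)] by blast
      obtain b' where b': "b' \<in> carrier Gt" "proj b' = y" using liftGt[OF xy(2)] by blast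
      have "a' \<in> carrier Ht" "b' \<in> carrier Ht" using a' b' xy Htc unfolding HS_def by auto
      moreover have "a' \<otimes>\<^bsub>Gt\<^esub> b' = b' \<otimes>\<^bsub>Gt\<^esub> a'" using A a' b' by blast
      then have "a' \<otimes>\<^bsub>Ht\<^esub> b' = b' \<otimes>\<^bsub>Ht\<^esub> a'" by (simp only: Htm)
      ultimately show "a \<otimes>\<^bsub>K\<^esub> b = b \<otimes>\<^bsub>K\<^esub> a" using HtK[of a' b' a b] ab a' b' by simp
    qed
  next
    assume B: "\<forall>a\<in>carrier K. \<forall>b\<in>carrier K. rho a = x \<longrightarrow> rho b = y \<longrightarrow> a \<otimes>\<^bsub>K\<^esub> b = b \<otimes>\<^bsub>K\<^esub> a"
    show "\<forall>a\<in>carrier Gt. \<forall>b\<in>carrier Gt. proj a = x \<longrightarrow> proj b = y \<longrightarrow> a \<otimes>\<^bsub>Gt\<^esub> b = b \<otimes>\<^bsub>Gt\<^esub> a"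
    proof (intro ballI impI)
      fix a' b' assume ab: "a' \<in> carrier Gt" "b' \<in> carrier Gt" "proj a' = x" "proj b' = y"
      obtain a where a: "a \<in> carrier K" "rho a = x" using liftK[OF xy(1)] by blast
      obtain b where b: "b \<in> carrier K" "rho b = y" using liftK[OF xy(2)] by blast
      have c: "a' \<in> carrier Ht" "b' \<in> carrier Ht" using ab xy Htc unfolding HS_def by auto
      have "a \<otimes>\<^bsub>K\<^esub> b = b \<otimes>\<^bsub>K\<^esub> a" using B a b by blast
      moreover have "proj a' = rho a" "proj b' = rho b" using ab a b by simp_all
      ultimately have "a' \<otimes>\<^bsub>Ht\<^esub> b' = b' \<otimes>\<^bsub>Ht\<^esub> a'" using KHt[OF c a(1) b(1)] by blast
      then show "a' \<otimes>\<^bsub>Gt\<^esub> b' = b' \<otimes>\<^bsub>Gt\<^esub> a'" by (simp only: Htm)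
    qed
  qed
  show ?thesis
    unfolding induced_subgraph_def deep_commuting_graph_def H0_def[symmetric]
  proof (simp only: fst_conv snd_conv prod.inject, intro conjI)
    show "carrier G \<inter> H = carrier H0" using Hc H0c by blast
    show "{(x, y). x \<in> carrier G \<and> y \<in> carrier G \<and> x \<noteq> y \<and>
          (\<forall>a\<in>carrier Gt. \<forall>b\<in>carrier Gt. proj a = x \<longrightarrow> proj b = y \<longrightarrow> a \<otimes>\<^bsub>Gt\<^esub> b = b \<otimes>\<^bsub>Gt\<^esub> a)} \<inter> H \<times> H =
        {(x, y). x \<in> carrier H0 \<and> y \<in> carrier H0 \<and> x \<noteq> y \<and>
          (\<forall>a\<in>carrier K. \<forall>b\<in>carrier K. rho a = x \<longrightarrow> rho b = y \<longrightarrow> a \<otimes>\<^bsub>K\<^esub> b = b \<otimes>\<^bsub>K\<^esub> a)}"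
    proof (rule Set.set_eqI)
      fix z :: "'a \<times> 'a"
      obtain x y where z: "z = (x, y)" by (cases z)
      let ?EG = "\<forall>a\<in>carrier Gt. \<forall>b\<in>carrier Gt. proj a = x \<longrightarrow> proj b = y \<longrightarrow> a \<otimes>\<^bsub>Gt\<^esub> b = b \<otimes>\<^bsub>Gt\<^esub> a"
      let ?EK = "\<forall>a\<in>carrier K. \<forall>b\<in>carrier K. rho a = x \<longrightarrow> rho b = y \<longrightarrow> a \<otimes>\<^bsub>K\<^esub> b = b \<otimes>\<^bsub>K\<^esub> a"
      have L: "z \<in> {(x, y). x \<in> carrier G \<and> y \<in> carrier G \<and> x \<noteq> y \<and>
          (\<forall>a\<in>carrier Gt. \<forall>b\<in>carrier Gt. proj a = x \<longrightarrow> proj b = y \<longrightarrow> a \<otimes>\<^bsub>Gt\<^esub> b = b \<otimes>\<^bsub>Gt\<^esub> a)} \<inter> H \<times> H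
          \<longleftrightarrow> x \<in> H \<and> y \<in> H \<and> x \<noteq> y \<and> ?EG"
        unfolding z using Hc by blast
      have R: "z \<in> {(x, y). x \<in> carrier H0 \<and> y \<in> carrier H0 \<and> x \<noteq> y \<and>
          (\<forall>a\<in>carrier K. \<forall>b\<in>carrier K. rho a = x \<longrightarrow> rho b = y \<longrightarrow> a \<otimes>\<^bsub>K\<^esub> b = b \<otimes>\<^bsub>K\<^esub> a)}
          \<longleftrightarrow> x \<in> H \<and> y \<in> H \<and> x \<noteq> y \<and> ?EK"
        unfolding z using H0c by simp
      show "z \<in> {(x, y). x \<in> carrier G \<and> y \<in> carrier G \<and> x \<noteq> y \<and>
          (\<forall>a\<in>carrier Gt. \<forall>b\<in>carrier Gt. proj a = x \<longrightarrow> proj b = y \<longrightarrow> a \<otimes>\<^bsub>Gt\<^esub> b = b \<otimes>\<^bsub>Gt\<^esub> a)} \<inter> H \<times> H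
          \<longleftrightarrow> z \<in> {(x, y). x \<in> carrier H0 \<and> y \<in> carrier H0 \<and> x \<noteq> y \<and>
          (\<forall>a\<in>carrier K. \<forall>b\<in>carrier K. rho a = x \<longrightarrow> rho b = y \<longrightarrow> a \<otimes>\<^bsub>K\<^esub> b = b \<otimes>\<^bsub>K\<^esub> a)}"
        unfolding L R using edge[of x y] by blast
    qed
  qed
qed

end
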